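(* Under Assumption A(b),(c) in setting (E), let $\mathbf p\in(0,1]$, $b\ge1$, set $\widetilde S^{-1}:=Gx^0$ and for $k\ge0$ $$\widetilde S^k:=\begin{cases}\widetilde S^{k-1}+2G_{\mathcal B_k}x^k-3G_{\mathcal B_k}x^{k-1}+G_{\mathcal B_k}x^{k-2}&\text{with probability }1-\mathbf p,\\ \overline S^k&\text{with probability }\mathbf p,\end{cases}$$ where $\mathcal B_k$ is a fresh i.i.d. mini-batch of size $b$, and $\overline S^k$ satisfies $\mathbb E_k[\overline S^k]=S^k$ and $\mathbb E_k\|\overline S^k-S^k\|^2\le\sigma_k^2$ (e.g. $\overline S^k=S^k$ with $\sigma_k=0$, or a mega-batch average of $2\mathbf G(x^k,\zeta)-\mathbf G(x^{k-1},\zeta)$ of size $n_k$). Then $\widetilde S^k$ belongs to class (B) with $\Delta_k:=\|\widetilde S^k-S^k\|^2$, $\tau=\mathbf p$, $\kappa=\mathbf p$, $\Theta=\frac{8(1-\mathbf p)L^2}{b}$, $\hat\Theta=\frac{2(1-\mathbf p)L^2}{b}$, $\delta_k=\mathbf p\sigma_k^2$.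
   Context: Setting: $G:\mathbb{R}^p\to\mathbb{R}^p$, $T:\mathbb{R}^p\rightrightarrows\mathbb{R}^p$, $\Phi:=G+T$, $\mathrm{zer}\,\Phi:=\{x:0\in Gx+Tx\}$, $J_{\eta T}:=(\mathbb{I}+\eta T)^{-1}$. (E): $Gx=\mathbb{E}_{\zeta\sim\mathbb P}[\mathbf G(x,\zeta)]$; (F) $Gx=\frac1n\sum_iG_ix$ is the special case with $\zeta$ uniform on $\{1,\dots,n\}$. $G_{\mathcal B}x:=\frac1{|\mathcal B|}\sum_{\zeta\in\mathcal B}\mathbf G(x,\zeta)$; an i.i.d. mini-batch of size $b$ is $b$ samples drawn i.i.d. from $\mathbb P$ independently of the past. Assumption A: (b) $\mathbb{E}_\zeta\|\mathbf G(x,\zeta)-Gx\|^2\le\sigma^2$ for all $x$; (c) $\mathbb{E}_\zeta\|\mathbf G(x,\zeta)-\mathbf G(y,\zeta)\|^2\le L^2\|x-y\|^2$ for all $x,y$. Scheme (VrFRBS): stepsize $\eta>0$, $x^0$, $x^{-2}=x^{-1}=x^0$, $\xi^0\in Tx^0$; for $k\ge0$: $S^k:=2Gx^k-Gx^{k-1}$, estimator $\widetilde S^k$, $x^{k+1}\in J_{\eta T}(x^k-\eta\widetilde S^k)$, $\xi^{k+1}:=\eta^{-1}(x^k-\eta\widetilde S^k-x^{k+1})\in Tx^{k+1}$; $e^k:=\widetilde S^k-S^k$ (so $e^{-1}=0$ with $S^{-1}:=Gx^0$). $\mathcal F_k$: $\sigma$-algebra of all randomness up to iteration $k$; $\mathbb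 E_k[\cdot]:=\mathbb E[\cdot\mid\mathcal F_k]$. Class (B) (biased variance-reduced): there exist nonnegative random variables $\Delta_k$ ($\Delta_{-1}:=0$), constants $\tau,\kappa\in(0,1]$, $\Theta,\hat\Theta\ge0$, nonnegative $\{\delta_k\}$, such that with $e^{-1}:=0$, a.s. for all $k\ge0$: $\mathbb E_k[e^k]=(1-\tau)e^{k-1}$; $\mathbb E_k\|e^k\|^2\le\mathbb E_k[\Delta_k]$; $\mathbb E_k[\Delta_k]\le(1-\kappa)\Delta_{k-1}+\Theta\|x^k-x^{k-1}\|^2+\hat\Theta\|x^{k-1}-x^{k-2}\|^2+\delta_k$. *)

theory Defs
  imports "HOL-Probability.Probability"
begin

definition batch_op :: "('e \<Rightarrow> 'z \<Rightarrow> 'e::real_vector) \<Rightarrow> nat \<Rightarrow> (nat \<Rightarrow> 'w \<Rightarrow> 'z) \<Rightarrow> 'e \<Rightarrow> 'w \<Rightarrow> 'e"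
  where "batch_op Gb b zk y \<omega> = (1 / real b) *\<^sub>R (\<Sum>j<b. Gb y (zk j \<omega>))"

text \<open>Iterates are indexed by nat; because of
  truncated subtraction  x (k-1), x (k-2)  for k = 0,1 equal  x 0, which matches the
  convention  x^{-2} = x^{-1} = x^0.  The event  C k  is the event of probability p
  on which the estimator is refreshed by  Sbar k.\<close>
definition vr_step :: "('e \<Rightarrow> 'z \<Rightarrow> 'e::real_vector) \<Rightarrow> nat \<Rightarrow> (nat \<Rightarrow> 'w \<Rightarrow> 'e) \<Rightarrow> (nat \<Rightarrow> 'w set)
    \<Rightarrow> (nat \<Rightarrow> nat \<Rightarrow> 'w \<Rightarrow> 'z) \<Rightarrow> (nat \<Rightarrow> 'w \<Rightarrow> 'e) \<Rightarrow> nat \<Rightarrow> 'e \<Rightarrow> 'w \<Rightarrow> 'e"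
  where "vr_step Gb b x C \<zeta> Sbar k prev \<omega> =
    (if \<omega> \<in> C k then Sbar k \<omega>
     else prev + 2 *\<^sub>R batch_op Gb b (\<zeta> k) (x k \<omega>) \<omega>
               - 3 *\<^sub>R batch_op Gb b (\<zeta> k) (x (k - 1) \<omega>) \<omega>
               + batch_op Gb b (\<zeta> k) (x (k - 2) \<omega>) \<omega>)"

primrec vr_est :: "('e \<Rightarrow> 'z \<Rightarrow> 'e::real_vector) \<Rightarrow> ('e \<Rightarrow> 'e) \<Rightarrow> nat \<Rightarrow> (nat \<Rightarrow> 'w \<Rightarrow> 'e)
    \<Rightarrow> (nat \<Rightarrow> 'w set) \<Rightarrow> (nat \<Rightarrow> nat \<Rightarrow> 'w \<Rightarrow> 'z) \<Rightarrow> (nat \<Rightarrow> 'w \<Rightarrow> 'e) \<Rightarrow> nat \<Rightarrow> 'w \<Rightarrow> 'e"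
  where
    "vr_est Gb G b x C \<zeta> Sbar 0 \<omega> = vr_step Gb b x C \<zeta> Sbar 0 (G (x 0 \<omega>)) \<omega>"
  | "vr_est Gb G b x C \<zeta> Sbar (Suc k) \<omega> = vr_step Gb b x C \<zeta> Sbar (Suc k) (vr_est Gb G b x C \<zeta> Sbar k \<omega>) \<omega>"

definition frb_S :: "('e \<Rightarrow> 'e::real_vector) \<Rightarrow> (nat \<Rightarrow> 'w \<Rightarrow> 'e) \<Rightarrow> nat \<Rightarrow> 'w \<Rightarrow> 'e"
  where "frb_S G x k \<omega> = 2 *\<^sub>R G (x k \<omega>) - G (x (k - 1) \<omega>)"

text \<open>Class (B) of biased variance-reduced estimators, with errors  e k  (k >= 0),
  e^{-1} := 0, Delta_{-1} := 0.  Conditional expectations E_k of vectors are taken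
  componentwise (real_cond_exp on each coordinate along Basis); conditional
  expectations of nonnegative quantities are nn_cond_exp.\<close>
definition classB :: "'w measure \<Rightarrow> (nat \<Rightarrow> 'w measure) \<Rightarrow> (nat \<Rightarrow> 'w \<Rightarrow> 'e::euclidean_space)
    \<Rightarrow> (nat \<Rightarrow> 'w \<Rightarrow> 'e) \<Rightarrow> (nat \<Rightarrow> 'w \<Rightarrow> real) \<Rightarrow> real \<Rightarrow> real \<Rightarrow> real \<Rightarrow> real \<Rightarrow> (nat \<Rightarrow> real) \<Rightarrow> bool"
  where "classB M F x e \<Delta> \<tau> \<kappa> \<Theta> \<Theta>h \<delta> \<longleftrightarrow>
    \<tau> \<in> {0<..1} \<and> \<kappa> \<in> {0<..1} \<and> \<Theta> \<ge> 0 \<and> \<Theta>h \<ge> 0 \<and> (\<forall>k. \<delta> k \<ge> 0) \<and>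
    (\<forall>k. \<Delta> k \<in> borel_measurable M) \<and> (\<forall>k. \<forall>\<omega>\<in>space M. \<Delta> k \<omega> \<ge> 0) \<and>
    (\<forall>k. \<forall>i\<in>Basis. AE \<omega> in M.
        real_cond_exp M (F k) (\<lambda>\<omega>. e k \<omega> \<bullet> i) \<omega>
          = (1 - \<tau>) * ((if k = 0 then 0 else e (k - 1) \<omega>) \<bullet> i)) \<and>
    (\<forall>k. AE \<omega> in M.
        nn_cond_exp M (F k) (\<lambda>\<omega>. ennreal ((norm (e k \<omega>))\<^sup>2)) \<omega>
          \<le> nn_cond_exp M (F k) (\<lambda>\<omega>. ennreal (\<Delta> k \<omega>)) \<omega>) \<and>
    (\<forall>k. AE \<omega> in M.
        nn_cond_exp M (F k) (\<lambda>\<omega>. ennreal (\<Delta> k \<omega>)) \<omega>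
          \<le> ennreal ((1 - \<kappa>) * (if k = 0 then 0 else \<Delta> (k - 1) \<omega>)
                     + \<Theta> * (norm (x k \<omega> - x (k - 1) \<omega>))\<^sup>2
                     + \<Theta>h * (norm (x (k - 1) \<omega> - x (k - 2) \<omega>))\<^sup>2 + \<delta> k))"

end

theory Submission
  imports Defs
begin

lemma indep_distr_pair:
  assumes M: "prob_space M" and F: "subalgebra M F"
   and X[measurable]: "X \<in> measurable F N" and Y[measurable]: "Y \<in> measurable M P"
   and ind: "prob_space.indep_set M (sets F) {Y -` B \<inter> space M | B. B \<in> sets P}"
  shows "distr M N X \<Otimes>\<^sub>M distr M P Y = distr M (N \<Otimes>\<^sub>M P) (\<lambda>x. (X x, Y x))"
proof -
  interpret prob_space M by fact
  have XM[measurable]: "X \<in> measurable M N" by (rule measurable_from_subalg[OF F X])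
  interpret DX: prob_space "distr M N X" by (rule prob_space_distr) simp
  interpret DY: prob_space "distr M P Y" by (rule prob_space_distr) simp
  have sF: "space F = space M" using F by (auto simp: subalgebra_def)
  show ?thesis
  proof (rule pair_measure_eqI)
    show "sigma_finite_measure (distr M N X)" "sigma_finite_measure (distr M P Y)" by unfold_locales
    show "sets (distr M N X \<Otimes>\<^sub>M distr M P Y) = sets (distr M (N \<Otimes>\<^sub>M P) (\<lambda>x. (X x, Y x)))"
      by (simp add: sets_pair_measure_cong[OF sets_distr sets_distr])
    fix A B assume A: "A \<in> sets (distr M N X)" and B: "B \<in> sets (distr M P Y)"
    then have A': "A \<in> sets N" and B': "B \<in> sets P" by auto
    have a: "X -` A \<inter> space M \<in> sets F" using X A' sF by (metis measurable_sets)
    have b: "Y -` B \<inter> space M \<in> {Y -` B \<inter> space M | B. B \<in> sets P}" using B' by blast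
    have e: "(\<lambda>x. (X x, Y x)) -` (A \<times> B) \<inter> space M = (X -` A \<inter> space M) \<inter> (Y -` B \<inter> space M)" by auto
    have "emeasure (distr M (N \<Otimes>\<^sub>M P) (\<lambda>x. (X x, Y x))) (A \<times> B) = emeasure M ((X -` A \<inter> space M) \<inter> (Y -` B \<inter> space M))"
      using A' B' by (subst emeasure_distr) (auto simp: e)
    also have "\<dots> = ennreal (prob ((X -` A \<inter> space M) \<inter> (Y -` B \<inter> space M)))" by (simp add: emeasure_eq_measure)
    also have "\<dots> = ennreal (prob (X -` A \<inter> space M) * prob (Y -` B \<inter> space M))"
      using indep_setD[OF ind a b] by simp
    also have "\<dots> = emeasure (distr M N X) A * emeasure (distr M P Y) B"
      using A' B' by (simp add: emeasure_distr emeasure_eq_measure ennreal_mult)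
    finally show "emeasure (distr M N X) A * emeasure (distr M P Y) B = emeasure (distr M (N \<Otimes>\<^sub>M P) (\<lambda>x. (X x, Y x))) (A \<times> B)" by simp
  qed
qed

lemma indep_pair_nn_integral:
  assumes M: "prob_space M" and F: "subalgebra M F"
   and X[measurable]: "X \<in> measurable F N" and Y[measurable]: "Y \<in> measurable M P"
   and ind: "prob_space.indep_set M (sets F) {Y -` B \<inter> space M | B. B \<in> sets P}"
    and f[measurable]: "f \<in> borel_measurable (N \<Otimes>\<^sub>M P)"
  shows "(\<integral>\<^sup>+\<omega>. f (X \<omega>, Y \<omega>) \<partial>M) = (\<integral>\<^sup>+\<omega>. (\<integral>\<^sup>+y. f (X \<omega>, y) \<partial>distr M P Y) \<partial>M)"
proof -
  interpret prob_space M by fact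
  have XM[measurable]: "X \<in> measurable M N" by (rule measurable_from_subalg[OF F X])
  have eq: "distr M N X \<Otimes>\<^sub>M distr M P Y = distr M (N \<Otimes>\<^sub>M P) (\<lambda>x. (X x, Y x))"
    by (rule indep_distr_pair[OF M F X Y ind])
  interpret DX: prob_space "distr M N X" by (rule prob_space_distr) simp
  interpret DY: prob_space "distr M P Y" by (rule prob_space_distr) simp
  have "(\<integral>\<^sup>+\<omega>. f (X \<omega>, Y \<omega>) \<partial>M) = (\<integral>\<^sup>+z. f z \<partial>distr M (N \<Otimes>\<^sub>M P) (\<lambda>x. (X x, Y x)))"
    by (subst nn_integral_distr) auto
  also have "\<dots> = (\<integral>\<^sup>+z. f z \<partial>(distr M N X \<Otimes>\<^sub>M distr M P Y))" by (simp add: eq)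
  also have "\<dots> = (\<integral>\<^sup>+x. (\<integral>\<^sup>+y. f (x, y) \<partial>distr M P Y) \<partial>distr M N X)"
    by (rule DY.nn_integral_fst[symmetric]) (simp add: measurable_cong_sets[OF sets_pair_measure_cong[OF sets_distr sets_distr] refl])
  also have "\<dots> = (\<integral>\<^sup>+\<omega>. (\<integral>\<^sup>+y. f (X \<omega>, y) \<partial>distr M P Y) \<partial>M)"
  proof (subst nn_integral_distr)
    have "(\<lambda>x. \<integral>\<^sup>+ y. f (x, y) \<partial>distr M P Y) \<in> borel_measurable N"
      by (rule DY.borel_measurable_nn_integral) (simp add: measurable_cong_sets[OF sets_pair_measure_cong[OF refl sets_distr] refl])
    then show "(\<lambda>x. \<integral>\<^sup>+ y. f (x, y) \<partial>distr M P Y) \<in> borel_measurable (distr M N X)" by simp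
  qed auto
  finally show ?thesis .
qed

lemma cond_freeze:
  assumes M: "prob_space M" and F: "subalgebra M F"
   and X[measurable]: "X \<in> measurable F N" and Y[measurable]: "Y \<in> measurable M P"
   and ind: "prob_space.indep_set M (sets F) {Y -` B \<inter> space M | B. B \<in> sets P}"
   and f[measurable]: "f \<in> borel_measurable (N \<Otimes>\<^sub>M P)"
  shows "AE \<omega> in M. nn_cond_exp M F (\<lambda>\<omega>. f (X \<omega>, Y \<omega>)) \<omega> = (\<integral>\<^sup>+y. f (X \<omega>, y) \<partial>distr M P Y)"
proof -
  interpret prob_space M by fact
  interpret finite_measure_subalgebra M F by unfold_locales (fact F)
  interpret DY: prob_space "distr M P Y" by (rule prob_space_distr) simp
  have XM[measurable]: "X \<in> measurable M N" by (rule measurable_from_subalg[OF F X])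
  have fN: "(\<lambda>x. \<integral>\<^sup>+ y. f (x, y) \<partial>distr M P Y) \<in> borel_measurable N"
    by (rule DY.borel_measurable_nn_integral) (simp add: measurable_cong_sets[OF sets_pair_measure_cong[OF refl sets_distr] refl])
  have gF: "(\<lambda>\<omega>. \<integral>\<^sup>+y. f (X \<omega>, y) \<partial>distr M P Y) \<in> borel_measurable F"
    using measurable_comp[OF X fN] by (simp add: comp_def)
  have "AE \<omega> in M. (\<integral>\<^sup>+y. f (X \<omega>, y) \<partial>distr M P Y) = nn_cond_exp M F (\<lambda>\<omega>. f (X \<omega>, Y \<omega>)) \<omega>"
  proof (rule nn_cond_exp_charact)
    fix A assume A: "A \<in> sets F"
    define X' where "X' = (\<lambda>\<omega>. (X \<omega>, \<omega> \<in> A))"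
    define f' where "f' = (\<lambda>z. if snd (fst z) then f (fst (fst z), snd z) else (0::ennreal))"
    have X'[measurable]: "X' \<in> measurable F (N \<Otimes>\<^sub>M count_space UNIV)"
      unfolding X'_def using A by measurable
    have f'[measurable]: "f' \<in> borel_measurable ((N \<Otimes>\<^sub>M count_space UNIV) \<Otimes>\<^sub>M P)"
      unfolding f'_def by measurable
    have "(\<integral>\<^sup>+\<omega>\<in>A. f (X \<omega>, Y \<omega>) \<partial>M) = (\<integral>\<^sup>+\<omega>. f' (X' \<omega>, Y \<omega>) \<partial>M)"
      by (rule nn_integral_cong) (auto simp: X'_def f'_def indicator_def)
    also have "\<dots> = (\<integral>\<^sup>+\<omega>. (\<integral>\<^sup>+y. f' (X' \<omega>, y) \<partial>distr M P Y) \<partial>M)"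
      by (rule indep_pair_nn_integral[OF M F X' Y ind f'])
    also have "\<dots> = (\<integral>\<^sup>+\<omega>\<in>A. (\<integral>\<^sup>+y. f (X \<omega>, y) \<partial>distr M P Y) \<partial>M)"
      by (rule nn_integral_cong) (auto simp: X'_def f'_def indicator_def)
    finally show "(\<integral>\<^sup>+\<omega>\<in>A. f (X \<omega>, Y \<omega>) \<partial>M) = (\<integral>\<^sup>+\<omega>\<in>A. (\<integral>\<^sup>+y. f (X \<omega>, y) \<partial>distr M P Y) \<partial>M)" .
  qed (use gF in auto)
  then show ?thesis by auto
qed

lemma coin_indep:
  assumes M: "prob_space M" and H: "subalgebra M H" and C: "C \<in> sets M"
    and ind: "prob_space.indep_set M {C} (sets H)"
  shows "prob_space.indep_set M (sets H) {(\<lambda>\<omega>. \<omega> \<in> C) -` B \<inter> space M | B. B \<in> sets (count_space UNIV)}"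
proof -
  interpret prob_space M by fact
  have sH: "space H = space M" using H by (auto simp: subalgebra_def)
  have "indep_set (sigma_sets (space M) {C}) (sigma_sets (space M) (sets H))"
    by (rule indep_set_sigma_sets[OF ind]) (auto simp: Int_stable_def sets.Int_stable)
  moreover have "sigma_sets (space M) (sets H) = sets H"
    using sets.sigma_sets_eq[of H] sH by simp
  ultimately have i2: "indep_set (sigma_sets (space M) {C}) (sets H)" by simp
  have sub: "{(\<lambda>\<omega>. \<omega> \<in> C) -` B \<inter> space M | B. B \<in> sets (count_space UNIV)} \<subseteq> sigma_sets (space M) {C}"
  proof safe
    fix B :: "bool set"
    have CC: "C \<inter> space M = C" using C sets.sets_into_space by blast
    have c1: "C \<in> sigma_sets (space M) {C}" by (rule sigma_sets.Basic) simp
    have c2: "space M - C \<in> sigma_sets (space M) {C}" by (rule sigma_sets.Compl[OF c1])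
    have c3: "space M \<in> sigma_sets (space M) {C}" using sigma_sets.Compl[OF sigma_sets.Empty, of "space M" "{C}"] by simp
    have e: "(\<lambda>\<omega>. \<omega> \<in> C) -` B \<inter> space M = (if True \<in> B then C else {}) \<union> (if False \<in> B then space M - C else {})"
    proof (rule set_eqI)
      fix \<omega>
      have CS: "C \<subseteq> space M" using CC by blast
      show "\<omega> \<in> (\<lambda>\<omega>. \<omega> \<in> C) -` B \<inter> space M \<longleftrightarrow> \<omega> \<in> (if True \<in> B then C else {}) \<union> (if False \<in> B then space M - C else {})"
        using CS by (cases "\<omega> \<in> C"; cases "True \<in> B"; cases "False \<in> B") auto
    qed
    have "(if True \<in> B then C else {}) \<union> (if False \<in> B then space M - C else {}) \<in> sigma_sets (space M) {C}"
      by (rule sigma_sets_Un) (simp_all add: c1 c2 sigma_sets.Empty)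
    then show "(\<lambda>\<omega>. \<omega> \<in> C) -` B \<inter> space M \<in> sigma_sets (space M) {C}"
      by (simp only: e)
  qed
  have ev: "sigma_sets (space M) {C} \<subseteq> events" using C by (simp add: sets.sigma_sets_subset)
  show ?thesis unfolding indep_sets2_eq
  proof safe
    show "\<And>x. x \<in> sets H \<Longrightarrow> x \<in> events" using H by (auto simp: subalgebra_def)
    show "\<And>x B. B \<in> sets (count_space UNIV) \<Longrightarrow> (\<lambda>\<omega>. \<omega> \<in> C) -` B \<inter> space M \<in> events"
      using sub ev by blast
    fix a B assume a: "a \<in> sets H" and B: "B \<in> sets (count_space (UNIV :: bool set))"
    have "(\<lambda>\<omega>. \<omega> \<in> C) -` B \<inter> space M \<in> sigma_sets (space M) {C}" using sub B by blast
    then show "prob (a \<inter> ((\<lambda>\<omega>. \<omega> \<in> C) -` B \<inter> space M)) = prob a * prob ((\<lambda>\<omega>. \<omega> \<in> C) -` B \<inter> space M)"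
      using i2 a unfolding indep_sets2_eq by (auto simp: Int_commute mult.commute)
  qed
qed

lemma coin_split:
  assumes M: "prob_space M" and F: "subalgebra M F" and H: "subalgebra M H" and HF: "subalgebra H F"
    and C: "C \<in> sets M" and ind: "prob_space.indep_set M {C} (sets H)" and pC: "measure M C = p"
    and h1[measurable]: "h1 \<in> borel_measurable H" and h2[measurable]: "h2 \<in> borel_measurable H"
  shows "AE \<omega> in M. nn_cond_exp M F (\<lambda>\<omega>. if \<omega> \<in> C then h1 \<omega> else h2 \<omega>) \<omega>
     = ennreal p * nn_cond_exp M F h1 \<omega> + ennreal (1 - p) * nn_cond_exp M F h2 \<omega>"
proof -
  interpret prob_space M by fact
  interpret finite_measure_subalgebra M F by unfold_locales (fact F)
  have [measurable]: "C \<in> sets M" by fact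
  have h1M[measurable]: "h1 \<in> borel_measurable M" by (rule measurable_from_subalg[OF H h1])
  have h2M[measurable]: "h2 \<in> borel_measurable M" by (rule measurable_from_subalg[OF H h2])
  define Y where "Y = (\<lambda>\<omega>. \<omega> \<in> C)"
  have Y[measurable]: "Y \<in> measurable M (count_space UNIV)" unfolding Y_def by measurable
  have X: "(\<lambda>\<omega>. (h1 \<omega>, h2 \<omega>)) \<in> measurable H (borel \<Otimes>\<^sub>M borel)" by measurable
  define f where "f = (\<lambda>z::(ennreal \<times> ennreal) \<times> bool. if snd z then fst (fst z) else snd (fst z))"
  have f[measurable]: "f \<in> borel_measurable ((borel \<Otimes>\<^sub>M borel) \<Otimes>\<^sub>M count_space UNIV)"
    unfolding f_def by measurable
  have 1: "AE \<omega> in M. nn_cond_exp M H (\<lambda>\<omega>. f ((h1 \<omega>, h2 \<omega>), Y \<omega>)) \<omega>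
       = (\<integral>\<^sup>+y. f ((h1 \<omega>, h2 \<omega>), y) \<partial>distr M (count_space UNIV) Y)"
    by (rule cond_freeze[OF M H X Y coin_indep[OF M H C ind, folded Y_def] f])
  have pC': "emeasure M C = ennreal p" "emeasure M (space M - C) = ennreal (1 - p)"
    using pC prob_compl[OF C] by (auto simp: emeasure_eq_measure)
  have 2: "(\<integral>\<^sup>+y. f ((a, b), y) \<partial>distr M (count_space UNIV) Y) = ennreal p * a + ennreal (1 - p) * b" for a b
  proof -
    have "(\<integral>\<^sup>+y. f ((a, b), y) \<partial>distr M (count_space UNIV) Y) = (\<integral>\<^sup>+\<omega>. f ((a, b), Y \<omega>) \<partial>M)"
      by (subst nn_integral_distr) auto
    also have "\<dots> = (\<integral>\<^sup>+\<omega>. a * indicator C \<omega> + b * indicator (space M - C) \<omega> \<partial>M)"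
      by (rule nn_integral_cong) (auto simp: f_def Y_def indicator_def)
    also have "\<dots> = a * emeasure M C + b * emeasure M (space M - C)"
      by (subst nn_integral_add) (auto simp: nn_integral_cmult_indicator)
    finally show ?thesis by (simp add: pC' mult.commute)
  qed
  have eqf: "(\<lambda>\<omega>. f ((h1 \<omega>, h2 \<omega>), Y \<omega>)) = (\<lambda>\<omega>. if \<omega> \<in> C then h1 \<omega> else h2 \<omega>)"
    by (auto simp: f_def Y_def)
  have A: "AE \<omega> in M. nn_cond_exp M H (\<lambda>\<omega>. if \<omega> \<in> C then h1 \<omega> else h2 \<omega>) \<omega> = ennreal p * h1 \<omega> + ennreal (1 - p) * h2 \<omega>"
    using 1 unfolding eqf 2 .
  have B: "AE \<omega> in M. nn_cond_exp M F (\<lambda>\<omega>. if \<omega> \<in> C then h1 \<omega> else h2 \<omega>) \<omega>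
      = nn_cond_exp M F (nn_cond_exp M H (\<lambda>\<omega>. if \<omega> \<in> C then h1 \<omega> else h2 \<omega>)) \<omega>"
    by (rule nn_cond_exp_nested_subalg[OF H HF]) measurable
  have C': "AE \<omega> in M. nn_cond_exp M F (nn_cond_exp M H (\<lambda>\<omega>. if \<omega> \<in> C then h1 \<omega> else h2 \<omega>)) \<omega>
      = nn_cond_exp M F (\<lambda>\<omega>. ennreal p * h1 \<omega> + ennreal (1 - p) * h2 \<omega>) \<omega>"
    by (rule nn_cond_exp_cong[OF A]) (auto intro: borel_measurable_nn_cond_exp2)
  have D: "AE \<omega> in M. nn_cond_exp M F (\<lambda>\<omega>. ennreal p * h1 \<omega>) \<omega> + nn_cond_exp M F (\<lambda>\<omega>. ennreal (1 - p) * h2 \<omega>) \<omega>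
      = nn_cond_exp M F (\<lambda>\<omega>. ennreal p * h1 \<omega> + ennreal (1 - p) * h2 \<omega>) \<omega>"
    by (rule nn_cond_exp_sum) auto
  have E1: "AE \<omega> in M. ennreal p * nn_cond_exp M F h1 \<omega> = nn_cond_exp M F (\<lambda>\<omega>. ennreal p * h1 \<omega>) \<omega>"
    by (rule nn_cond_exp_prod) auto
  have E2: "AE \<omega> in M. ennreal (1 - p) * nn_cond_exp M F h2 \<omega> = nn_cond_exp M F (\<lambda>\<omega>. ennreal (1 - p) * h2 \<omega>) \<omega>"
    by (rule nn_cond_exp_prod) auto
  show ?thesis using B C' D E1 E2 by eventually_elim simp
qed

lemma sq_integrable:
  fixes W :: "'z \<Rightarrow> 'e::euclidean_space"
  assumes [measurable]: "W \<in> borel_measurable Q" and fin: "(\<integral>\<^sup>+y. ennreal ((norm (W y))\<^sup>2) \<partial>Q) \<noteq> \<infinity>"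
  shows "integrable Q (\<lambda>y. (norm (W y))\<^sup>2)"
  unfolding integrable_iff_bounded using fin by (auto simp: less_top)

lemma mean_zero_sq:
  fixes W :: "'z \<Rightarrow> 'e::euclidean_space"
  assumes Q: "prob_space Q" and Wm[measurable]: "W \<in> borel_measurable Q" and Wi: "integrable Q W"
    and W0: "integral\<^sup>L Q W = 0" and fin: "(\<integral>\<^sup>+y. ennreal ((norm (W y))\<^sup>2) \<partial>Q) \<noteq> \<infinity>"
  shows "(\<integral>\<^sup>+y. ennreal ((norm (u + W y))\<^sup>2) \<partial>Q) = ennreal ((norm u)\<^sup>2) + (\<integral>\<^sup>+y. ennreal ((norm (W y))\<^sup>2) \<partial>Q)"
proof -
  interpret prob_space Q by fact
  have si: "integrable Q (\<lambda>y. (norm (W y))\<^sup>2)" by (rule sq_integrable[OF Wm fin])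
  have ex: "(norm (u + W y))\<^sup>2 = (norm u)\<^sup>2 + 2 * (u \<bullet> W y) + (norm (W y))\<^sup>2" for y
    by (simp add: power2_norm_eq_inner inner_add_left inner_add_right inner_commute)
  have ii: "integrable Q (\<lambda>y. u \<bullet> W y)" using Wi by auto
  have i2: "integrable Q (\<lambda>y. (norm u)\<^sup>2 + 2 * (u \<bullet> W y) + (norm (W y))\<^sup>2)"
    using ii si by auto
  have "(\<integral>\<^sup>+y. ennreal ((norm (u + W y))\<^sup>2) \<partial>Q) = ennreal (\<integral>y. (norm (u + W y))\<^sup>2 \<partial>Q)"
    by (rule nn_integral_eq_integral) (use i2 in \<open>simp only: ex[symmetric]\<close>, simp)
  also have "(\<integral>y. (norm (u + W y))\<^sup>2 \<partial>Q) = (norm u)\<^sup>2 + (\<integral>y. (norm (W y))\<^sup>2 \<partial>Q)"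
    using ii si Wi W0 by (simp add: ex prob_space)
  also have "ennreal \<dots> = ennreal ((norm u)\<^sup>2) + ennreal (\<integral>y. (norm (W y))\<^sup>2 \<partial>Q)"
    by (rule ennreal_plus) auto
  also have "ennreal (\<integral>y. (norm (W y))\<^sup>2 \<partial>Q) = (\<integral>\<^sup>+y. ennreal ((norm (W y))\<^sup>2) \<partial>Q)"
    by (rule nn_integral_eq_integral[symmetric]) (use si in auto)
  finally show ?thesis .
qed

lemma meas_batch_sum:
  fixes W :: "'z \<Rightarrow> 'e::euclidean_space"
  assumes Wm: "W \<in> borel_measurable Pz" and I: "{..<m} \<subseteq> I"
  shows "(\<lambda>y. \<Sum>j<m. W (y j)) \<in> borel_measurable (PiM I (\<lambda>_. Pz))"
proof (rule borel_measurable_sum)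
  fix j assume "j \<in> {..<m}"
  then have "j \<in> I" using I by auto
  then show "(\<lambda>y. W (y j)) \<in> borel_measurable (PiM I (\<lambda>_. Pz))"
    using measurable_compose[OF measurable_component_singleton[of j I "\<lambda>_. Pz"] Wm] by auto
qed

lemma batch_sq:
  fixes W :: "'z \<Rightarrow> 'e::euclidean_space"
  assumes Pz: "prob_space Pz" and Wm[measurable]: "W \<in> borel_measurable Pz" and Wi: "integrable Pz W"
    and W0: "integral\<^sup>L Pz W = 0" and fin: "(\<integral>\<^sup>+y. ennreal ((norm (W y))\<^sup>2) \<partial>Pz) \<noteq> \<infinity>"
  shows "(\<integral>\<^sup>+y. ennreal ((norm (c + (\<Sum>j<n. W (y j))))\<^sup>2) \<partial>PiM {..<n} (\<lambda>_. Pz))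
     = ennreal ((norm c)\<^sup>2) + of_nat n * (\<integral>\<^sup>+z. ennreal ((norm (W z))\<^sup>2) \<partial>Pz)"
proof -
  have PP: "product_prob_space (\<lambda>_::nat. Pz)"
    using Pz by (simp add: product_prob_space_def product_prob_space_axioms_def product_sigma_finite_def prob_space_imp_sigma_finite)
  interpret product_prob_space "\<lambda>_::nat. Pz" by (rule PP)
  show ?thesis
  proof (induction n)
    case 0
    have "emeasure (PiM {} (\<lambda>_::nat. Pz)) (space (PiM {} (\<lambda>_::nat. Pz))) = 1" by (rule prob_space.emeasure_space_1[OF prob_space_PiM[OF Pz]])
    then show ?case by simp
  next
    case (Suc n)
    let ?K = "(\<integral>\<^sup>+z. ennreal ((norm (W z))\<^sup>2) \<partial>Pz)"
    have [measurable]: "(\<lambda>y. \<Sum>j<Suc n. W (y j)) \<in> borel_measurable (PiM (insert n {..<n}) (\<lambda>_. Pz))"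
      by (rule meas_batch_sum[OF Wm]) auto
    have meas: "(\<lambda>y. ennreal ((norm (c + (\<Sum>j<Suc n. W (y j))))\<^sup>2)) \<in> borel_measurable (PiM (insert n {..<n}) (\<lambda>_. Pz))"
      by measurable
    have "(\<integral>\<^sup>+y. ennreal ((norm (c + (\<Sum>j<Suc n. W (y j))))\<^sup>2) \<partial>PiM {..<Suc n} (\<lambda>_. Pz))
        = (\<integral>\<^sup>+y. ennreal ((norm (c + (\<Sum>j<Suc n. W (y j))))\<^sup>2) \<partial>PiM (insert n {..<n}) (\<lambda>_. Pz))"
      by (simp add: lessThan_Suc)
    also have "\<dots> = (\<integral>\<^sup>+x. (\<integral>\<^sup>+z. ennreal ((norm (c + (\<Sum>j<Suc n. W ((x(n := z)) j))))\<^sup>2) \<partial>Pz) \<partial>PiM {..<n} (\<lambda>_. Pz))"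
      by (rule product_nn_integral_insert[OF _ _ meas]) auto
    also have "\<dots> = (\<integral>\<^sup>+x. ennreal ((norm (c + (\<Sum>j<n. W (x j))))\<^sup>2) + ?K \<partial>PiM {..<n} (\<lambda>_. Pz))"
    proof (rule nn_integral_cong)
      fix x
      have "(\<Sum>j<Suc n. W ((x(n := z)) j)) = (\<Sum>j<n. W (x j)) + W z" for z
        by (simp add: sum.lessThan_Suc)
      then show "(\<integral>\<^sup>+z. ennreal ((norm (c + (\<Sum>j<Suc n. W ((x(n := z)) j))))\<^sup>2) \<partial>Pz) = ennreal ((norm (c + (\<Sum>j<n. W (x j))))\<^sup>2) + ?K"
        using mean_zero_sq[OF Pz Wm Wi W0 fin, of "c + (\<Sum>j<n. W (x j))"] by (simp add: add.assoc)
    qed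
    also have "\<dots> = (\<integral>\<^sup>+x. ennreal ((norm (c + (\<Sum>j<n. W (x j))))\<^sup>2) \<partial>PiM {..<n} (\<lambda>_. Pz)) + ?K"
    proof -
      have [measurable]: "(\<lambda>y. \<Sum>j<n. W (y j)) \<in> borel_measurable (PiM {..<n} (\<lambda>_. Pz))"
        by (rule meas_batch_sum[OF Wm]) auto
      have m2: "(\<lambda>x. ennreal ((norm (c + (\<Sum>j<n. W (x j))))\<^sup>2)) \<in> borel_measurable (PiM {..<n} (\<lambda>_. Pz))"
        by measurable
      have "emeasure (PiM {..<n} (\<lambda>_. Pz)) (space (PiM {..<n} (\<lambda>_. Pz))) = 1"
        by (rule prob_space.emeasure_space_1[OF prob_space_PiM[OF Pz]])
      then show ?thesis by (subst nn_integral_add[OF m2]) simp_all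
    qed
    also have "\<dots> = ennreal ((norm c)\<^sup>2) + of_nat (Suc n) * ?K"
    proof -
      have e: "of_nat (Suc n) * ?K = of_nat n * ?K + ?K" by (simp add: distrib_right)
      show ?thesis by (simp only: Suc.IH e add.assoc)
    qed
    finally show ?case .
  qed
qed

lemma batch_mean:
  fixes W :: "'z \<Rightarrow> 'e::euclidean_space"
  assumes Pz: "prob_space Pz" and Wm[measurable]: "W \<in> borel_measurable Pz" and Wi: "integrable Pz W"
    and W0: "integral\<^sup>L Pz W = 0"
  shows "integrable (PiM {..<n} (\<lambda>_. Pz)) (\<lambda>y. c + r *\<^sub>R (\<Sum>j<n. W (y j)))"
    and "(\<integral>y. c + r *\<^sub>R (\<Sum>j<n. W (y j)) \<partial>PiM {..<n} (\<lambda>_. Pz)) = c"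
proof -
  interpret Q: prob_space "PiM {..<n} (\<lambda>_. Pz)" by (rule prob_space_PiM[OF Pz])
  have comp: "(\<lambda>y. y j) \<in> measurable (PiM {..<n} (\<lambda>_. Pz)) Pz" if "j < n" for j
    using measurable_component_singleton[of j "{..<n}" "\<lambda>_. Pz"] that by auto
  have dj: "distr (PiM {..<n} (\<lambda>_. Pz)) Pz (\<lambda>y. y j) = Pz" if "j < n" for j
    using distr_PiM_component[of "{..<n}" "\<lambda>_. Pz" j] Pz that by auto
  have ij: "integrable (PiM {..<n} (\<lambda>_. Pz)) (\<lambda>y. W (y j))" if "j < n" for j
    using integrable_distr_eq[OF comp[OF that] Wm] dj[OF that] Wi by simp
  have zj: "(\<integral>y. W (y j) \<partial>PiM {..<n} (\<lambda>_. Pz)) = 0" if "j < n" for j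
    using integral_distr[OF comp[OF that] Wm] dj[OF that] W0 by simp
  have isum: "integrable (PiM {..<n} (\<lambda>_. Pz)) (\<lambda>y. \<Sum>j<n. W (y j))"
    using Bochner_Integration.integrable_sum[where I="{..<n}" and M="PiM {..<n} (\<lambda>_. Pz)" and f="\<lambda>j y. W (y j)"] ij by auto
  show "integrable (PiM {..<n} (\<lambda>_. Pz)) (\<lambda>y. c + r *\<^sub>R (\<Sum>j<n. W (y j)))"
    using isum by auto
  have "(\<integral>y. (\<Sum>j<n. W (y j)) \<partial>PiM {..<n} (\<lambda>_. Pz)) = 0"
    using Bochner_Integration.integral_sum[where I="{..<n}" and M="PiM {..<n} (\<lambda>_. Pz)" and f="\<lambda>j y. W (y j)"] ij zj by auto
  then show "(\<integral>y. c + r *\<^sub>R (\<Sum>j<n. W (y j)) \<partial>PiM {..<n} (\<lambda>_. Pz)) = c"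
    using isum by (simp add: Q.prob_space)
qed

lemma sq_diff_le: "(norm (a - b))\<^sup>2 \<le> 2 * (norm a)\<^sup>2 + 2 * (norm (b :: 'a::real_normed_vector))\<^sup>2"
proof -
  have "norm (a - b) \<le> norm a + norm b" by (rule norm_triangle_ineq4)
  then have "(norm (a - b))\<^sup>2 \<le> (norm a + norm b)\<^sup>2" by (simp add: power_mono)
  also have "\<dots> \<le> 2 * (norm a)\<^sup>2 + 2 * (norm b)\<^sup>2"
    using sum_squares_ge_zero[of "norm a - norm b" 0] by (simp add: power2_eq_square algebra_simps)
  finally show ?thesis .
qed

lemma var_decomp:
  fixes V :: "'z \<Rightarrow> 'e::euclidean_space"
  assumes Q: "prob_space Q" and Vm[measurable]: "V \<in> borel_measurable Q" and Vi: "integrable Q V"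
    and fin: "(\<integral>\<^sup>+y. ennreal ((norm (V y))\<^sup>2) \<partial>Q) \<noteq> \<infinity>"
  shows "(\<integral>\<^sup>+y. ennreal ((norm (V y))\<^sup>2) \<partial>Q) = ennreal ((norm (integral\<^sup>L Q V))\<^sup>2) + (\<integral>\<^sup>+y. ennreal ((norm (V y - integral\<^sup>L Q V))\<^sup>2) \<partial>Q)"
    and "(\<integral>\<^sup>+y. ennreal ((norm (V y - integral\<^sup>L Q V))\<^sup>2) \<partial>Q) \<noteq> \<infinity>"
proof -
  interpret prob_space Q by fact
  let ?m = "integral\<^sup>L Q V"
  have "(\<integral>\<^sup>+y. ennreal ((norm (V y - ?m))\<^sup>2) \<partial>Q) \<le> (\<integral>\<^sup>+y. ennreal (2 * (norm (V y))\<^sup>2) + ennreal (2 * (norm ?m)\<^sup>2) \<partial>Q)"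
    by (rule nn_integral_mono) (simp add: ennreal_plus[symmetric] sq_diff_le del: ennreal_plus)
  also have "\<dots> = (\<integral>\<^sup>+y. ennreal 2 * ennreal ((norm (V y))\<^sup>2) \<partial>Q) + ennreal (2 * (norm ?m)\<^sup>2)"
    by (subst nn_integral_add) (auto simp: emeasure_space_1 ennreal_mult)
  also have "\<dots> = ennreal 2 * (\<integral>\<^sup>+y. ennreal ((norm (V y))\<^sup>2) \<partial>Q) + ennreal (2 * (norm ?m)\<^sup>2)"
    by (subst nn_integral_cmult) auto
  also have "\<dots> < \<infinity>" using fin by (simp add: less_top ennreal_mult_less_top)
  finally show fin2: "(\<integral>\<^sup>+y. ennreal ((norm (V y - ?m))\<^sup>2) \<partial>Q) \<noteq> \<infinity>" by simp
  have "(\<integral>\<^sup>+y. ennreal ((norm (?m + (V y - ?m)))\<^sup>2) \<partial>Q) = ennreal ((norm ?m)\<^sup>2) + (\<integral>\<^sup>+y. ennreal ((norm (V y - ?m))\<^sup>2) \<partial>Q)"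
    by (rule mean_zero_sq[OF Q _ _ _ fin2]) (use Vi in \<open>auto simp: prob_space\<close>)
  then show "(\<integral>\<^sup>+y. ennreal ((norm (V y))\<^sup>2) \<partial>Q) = ennreal ((norm ?m)\<^sup>2) + (\<integral>\<^sup>+y. ennreal ((norm (V y - ?m))\<^sup>2) \<partial>Q)"
    by simp
qed

definition Wfun :: "('e \<Rightarrow> 'z \<Rightarrow> 'e::real_vector) \<Rightarrow> ('e \<Rightarrow> 'e) \<Rightarrow> 'e \<Rightarrow> 'e \<Rightarrow> 'e \<Rightarrow> 'z \<Rightarrow> 'e" where
  "Wfun Gb G a a' a'' z = 2 *\<^sub>R (Gb a z - G a) - 3 *\<^sub>R (Gb a' z - G a') + (Gb a'' z - G a'')"

lemma Gb_comp:
  fixes Gb :: "'e::euclidean_space \<Rightarrow> 'z \<Rightarrow> 'e"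
  assumes Gb_meas: "(\<lambda>(y, z). Gb y z) \<in> borel_measurable (borel \<Otimes>\<^sub>M Pz)"
    and f: "f \<in> borel_measurable N" and g: "g \<in> measurable N Pz"
  shows "(\<lambda>\<omega>. Gb (f \<omega>) (g \<omega>)) \<in> borel_measurable N"
  using measurable_compose[OF measurable_Pair[OF f g] Gb_meas] by simp

lemma G_meas:
  fixes Gb :: "'e::euclidean_space \<Rightarrow> 'z \<Rightarrow> 'e"
  assumes Pz: "prob_space Pz" and Gb_meas: "(\<lambda>(y, z). Gb y z) \<in> borel_measurable (borel \<Otimes>\<^sub>M Pz)"
    and G_def: "\<And>y. G y = (\<integral>z. Gb y z \<partial>Pz)"
  shows "G \<in> borel_measurable borel"
proof -
  interpret prob_space Pz by fact
  have "(\<lambda>y. \<integral>z. Gb y z \<partial>Pz) \<in> borel_measurable borel"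
    by (rule borel_measurable_lebesgue_integral) (use Gb_meas in \<open>simp add: case_prod_beta'\<close>)
  moreover have "G = (\<lambda>y. \<integral>z. Gb y z \<partial>Pz)" using G_def by auto
  ultimately show ?thesis by simp
qed

locale Gsetting =
  fixes Pz :: "'z measure" and Gb :: "'e::euclidean_space \<Rightarrow> 'z \<Rightarrow> 'e" and G :: "'e \<Rightarrow> 'e" and L :: real
  assumes Pz: "prob_space Pz"
    and Gb_meas: "(\<lambda>(y, z). Gb y z) \<in> borel_measurable (borel \<Otimes>\<^sub>M Pz)"
    and Gb_int: "\<And>y. integrable Pz (Gb y)"
    and G_def: "\<And>y. G y = (\<integral>z. Gb y z \<partial>Pz)"
    and A_c: "\<And>y y'. (\<integral>\<^sup>+z. ennreal ((norm (Gb y z - Gb y' z))\<^sup>2) \<partial>Pz) \<le> ennreal (L\<^sup>2 * (norm (y - y'))\<^sup>2)"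
begin

lemma Gb_meas1[measurable]: "Gb a \<in> borel_measurable Pz"
  using Gb_comp[OF Gb_meas, of "\<lambda>_. a" Pz "\<lambda>z. z"] by simp

lemma G_borel[measurable]: "G \<in> borel_measurable borel"
  by (rule G_meas[OF Pz Gb_meas G_def])

lemma A_c_fin: "(\<integral>\<^sup>+z. ennreal ((norm (Gb y z - Gb y' z))\<^sup>2) \<partial>Pz) \<noteq> \<infinity>"
  using A_c[of y y'] by (auto simp: top_unique)

lemma G_lip: "norm (G a - G a') \<le> \<bar>L\<bar> * norm (a - a')"
proof -
  have i: "integrable Pz (\<lambda>z. Gb a z - Gb a' z)" using Gb_int by auto
  have m: "(\<integral>z. Gb a z - Gb a' z \<partial>Pz) = G a - G a'" using Gb_int G_def by simp
  have "ennreal ((norm (G a - G a'))\<^sup>2) \<le> (\<integral>\<^sup>+z. ennreal ((norm (Gb a z - Gb a' z))\<^sup>2) \<partial>Pz)"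
    using var_decomp(1)[OF Pz _ i A_c_fin] m by simp
  also have "\<dots> \<le> ennreal (L\<^sup>2 * (norm (a - a'))\<^sup>2)" by (rule A_c)
  finally have "(norm (G a - G a'))\<^sup>2 \<le> L\<^sup>2 * (norm (a - a'))\<^sup>2"
    by (subst (asm) ennreal_le_iff) auto
  then have "(norm (G a - G a'))\<^sup>2 \<le> (\<bar>L\<bar> * norm (a - a'))\<^sup>2" by (simp add: power_mult_distrib)
  then show ?thesis by (rule power2_le_imp_le) simp
qed

lemma Wfun_meas[measurable]: "Wfun Gb G a a' a'' \<in> borel_measurable Pz"
  unfolding Wfun_def[abs_def] by measurable

lemma Wfun_int: "integrable Pz (Wfun Gb G a a' a'')"
proof -
  interpret prob_space Pz by (rule Pz)
  show ?thesis unfolding Wfun_def[abs_def] using Gb_int by auto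
qed

lemma Wfun_mean: "integral\<^sup>L Pz (Wfun Gb G a a' a'') = 0"
proof -
  interpret prob_space Pz by (rule Pz)
  show ?thesis unfolding Wfun_def[abs_def] using Gb_int G_def by (simp add: prob_space)
qed

lemma Wfun_sq: "(\<integral>\<^sup>+z. ennreal ((norm (Wfun Gb G a a' a'' z))\<^sup>2) \<partial>Pz)
   \<le> ennreal (8 * L\<^sup>2 * (norm (a - a'))\<^sup>2 + 2 * L\<^sup>2 * (norm (a' - a''))\<^sup>2)"
proof -
  interpret prob_space Pz by (rule Pz)
  define V where "V = (\<lambda>z. 2 *\<^sub>R (Gb a z - Gb a' z) - (Gb a' z - Gb a'' z))"
  have Vm[measurable]: "V \<in> borel_measurable Pz" unfolding V_def by measurable
  have Vi: "integrable Pz V" unfolding V_def using Gb_int by auto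
  have Vmean: "integral\<^sup>L Pz V = 2 *\<^sub>R (G a - G a') - (G a' - G a'')"
    unfolding V_def using Gb_int G_def by simp
  have WV: "Wfun Gb G a a' a'' z = V z - integral\<^sup>L Pz V" for z
  proof -
    have h3: "(3::real) *\<^sub>R v = v + 2 *\<^sub>R v" for v :: 'e
      using scaleR_add_left[of 1 2 v] by simp
    show ?thesis by (simp only: Wfun_def Vmean) (simp add: V_def h3 algebra_simps)
  qed
  have pw: "(norm (V z))\<^sup>2 \<le> 8 * (norm (Gb a z - Gb a' z))\<^sup>2 + 2 * (norm (Gb a' z - Gb a'' z))\<^sup>2" for z
    using sq_diff_le[of "2 *\<^sub>R (Gb a z - Gb a' z)" "Gb a' z - Gb a'' z"] unfolding V_def
    by (simp add: power_mult_distrib)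
  have "(\<integral>\<^sup>+z. ennreal ((norm (V z))\<^sup>2) \<partial>Pz)
      \<le> (\<integral>\<^sup>+z. 8 * ennreal ((norm (Gb a z - Gb a' z))\<^sup>2) + 2 * ennreal ((norm (Gb a' z - Gb a'' z))\<^sup>2) \<partial>Pz)"
  proof (rule nn_integral_mono)
    fix z
    have "ennreal ((norm (V z))\<^sup>2) \<le> ennreal (8 * (norm (Gb a z - Gb a' z))\<^sup>2 + 2 * (norm (Gb a' z - Gb a'' z))\<^sup>2)"
      using pw by (rule ennreal_leI)
    also have "\<dots> = 8 * ennreal ((norm (Gb a z - Gb a' z))\<^sup>2) + 2 * ennreal ((norm (Gb a' z - Gb a'' z))\<^sup>2)"
      by (simp add: ennreal_mult)
    finally show "ennreal ((norm (V z))\<^sup>2) \<le> 8 * ennreal ((norm (Gb a z - Gb a' z))\<^sup>2) + 2 * ennreal ((norm (Gb a' z - Gb a'' z))\<^sup>2)" .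
  qed
  also have "\<dots> = 8 * (\<integral>\<^sup>+z. ennreal ((norm (Gb a z - Gb a' z))\<^sup>2) \<partial>Pz) + 2 * (\<integral>\<^sup>+z. ennreal ((norm (Gb a' z - Gb a'' z))\<^sup>2) \<partial>Pz)"
    by (simp add: nn_integral_add nn_integral_cmult)
  also have "\<dots> \<le> 8 * ennreal (L\<^sup>2 * (norm (a - a'))\<^sup>2) + 2 * ennreal (L\<^sup>2 * (norm (a' - a''))\<^sup>2)"
    by (intro add_mono mult_left_mono A_c) auto
  also have "\<dots> = ennreal (8 * L\<^sup>2 * (norm (a - a'))\<^sup>2 + 2 * L\<^sup>2 * (norm (a' - a''))\<^sup>2)"
    by (simp add: ennreal_mult mult.assoc)
  finally have Vb: "(\<integral>\<^sup>+z. ennreal ((norm (V z))\<^sup>2) \<partial>Pz) \<le> ennreal (8 * L\<^sup>2 * (norm (a - a'))\<^sup>2 + 2 * L\<^sup>2 * (norm (a' - a''))\<^sup>2)" .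
  then have Vf: "(\<integral>\<^sup>+z. ennreal ((norm (V z))\<^sup>2) \<partial>Pz) \<noteq> \<infinity>" by (auto simp: top_unique)
  have "(\<integral>\<^sup>+z. ennreal ((norm (Wfun Gb G a a' a'' z))\<^sup>2) \<partial>Pz) \<le> (\<integral>\<^sup>+z. ennreal ((norm (V z))\<^sup>2) \<partial>Pz)"
    using var_decomp(1)[OF Pz Vm Vi Vf] by (simp add: WV)
  then show ?thesis using Vb by (rule order_trans)
qed

lemma Wfun_fin: "(\<integral>\<^sup>+z. ennreal ((norm (Wfun Gb G a a' a'' z))\<^sup>2) \<partial>Pz) \<noteq> \<infinity>"
  using Wfun_sq[of a a' a''] by (auto simp: top_unique)

end

lemma indep_sets_reindex_inj:
  assumes M: "prob_space M" and ind: "prob_space.indep_sets M E (f ` I)" and inj: "inj_on f I"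
  shows "prob_space.indep_sets M (\<lambda>j. E (f j)) I"
proof -
  interpret prob_space M by fact
  show ?thesis unfolding indep_sets_def
  proof (intro conjI ballI allI impI)
    fix j assume "j \<in> I"
    then show "E (f j) \<subseteq> events" using ind unfolding indep_sets_def by auto
  next
    fix J A assume J: "J \<subseteq> I" "J \<noteq> {}" "finite J" and A: "A \<in> Pi J (\<lambda>j. E (f j))"
    define A' where "A' = (\<lambda>u. A (the_inv_into I f u))"
    have inv: "the_inv_into I f (f j) = j" if "j \<in> J" for j
      using the_inv_into_f_f[OF inj] J that by auto
    have A'P: "A' \<in> Pi (f ` J) E" using A by (auto simp: A'_def inv Pi_iff)
    have "prob (\<Inter>u\<in>f ` J. A' u) = (\<Prod>u\<in>f ` J. prob (A' u))"
      using ind J A'P unfolding indep_sets_def by (meson finite_imageI image_is_empty image_mono)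
    moreover have "(\<Inter>u\<in>f ` J. A' u) = (\<Inter>j\<in>J. A j)" by (auto simp: A'_def inv)
    moreover have "(\<Prod>u\<in>f ` J. prob (A' u)) = (\<Prod>j\<in>J. prob (A j))"
      using inj J by (subst prod.reindex) (auto simp: A'_def inv intro: inj_on_subset)
    ultimately show "prob (\<Inter>j\<in>J. A j) = (\<Prod>j\<in>J. prob (A j))" by simp
  qed
qed

lemma batch_indep:
  fixes \<zeta> :: "nat \<Rightarrow> 'w \<Rightarrow> 'z"
  assumes M: "prob_space M" and F: "subalgebra M F"
    and zm: "\<And>j. \<zeta> j \<in> measurable M Pz"
    and ind: "prob_space.indep_sets M (\<lambda>i. case i of None \<Rightarrow> sets F
                    | Some j \<Rightarrow> {\<zeta> j -` A \<inter> space M | A. A \<in> sets Pz}) (insert None (Some ` {..<b}))"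
  shows "prob_space.indep_set M (sets F) {(\<lambda>\<omega>. \<lambda>j\<in>{..<b}. \<zeta> j \<omega>) -` B \<inter> space M | B. B \<in> sets (PiM {..<b} (\<lambda>_. Pz))}"
proof -
  interpret prob_space M by fact
  define E where "E = (\<lambda>i. case i of None \<Rightarrow> sets F | Some j \<Rightarrow> {\<zeta> j -` A \<inter> space M | A. A \<in> sets Pz})"
  define I where "I = (\<lambda>t::bool. if t then {None} else Some ` {..<b})"
  have U: "(\<Union>t. I t) = insert None (Some ` {..<b})" by (auto simp: I_def)
  have sF: "space F = space M" using F by (auto simp: subalgebra_def)
  have i1: "indep_sets (\<lambda>t. sigma_sets (space M) (\<Union>i\<in>I t. E i)) UNIV"
  proof (rule indep_sets_collect_sigma)
    show "indep_sets E (\<Union>j\<in>UNIV. I j)" using ind unfolding E_def U .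
    fix i t assume "i \<in> I t"
    show "Int_stable (E i)"
    proof (cases i)
      case None then show ?thesis by (simp add: E_def sets.Int_stable)
    next
      case (Some j)
      show ?thesis unfolding E_def Some
      proof (rule Int_stableI, simp, elim exE conjE)
        fix A B a c assume "A = \<zeta> j -` a \<inter> space M" "a \<in> sets Pz" "B = \<zeta> j -` c \<inter> space M" "c \<in> sets Pz"
        then show "\<exists>d. A \<inter> B = \<zeta> j -` d \<inter> space M \<and> d \<in> sets Pz"
          by (intro exI[of _ "a \<inter> c"]) auto
      qed
    qed
  next
    show "disjoint_family_on I UNIV" by (auto simp: disjoint_family_on_def I_def)
  qed
  have e1: "(\<Union>i\<in>I True. E i) = sets F" by (simp add: I_def E_def)
  have e2: "sigma_sets (space M) (sets F) = sets F" using sets.sigma_sets_eq[of F] sF by simp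
  define Gz where "Gz = (\<Union>j<b. {\<zeta> j -` A \<inter> space M | A. A \<in> sets Pz})"
  have e3: "(\<Union>i\<in>I False. E i) = Gz" by (auto simp: I_def E_def Gz_def)
  have "(\<lambda>t. sigma_sets (space M) (\<Union>i\<in>I t. E i)) = case_bool (sets F) (sigma_sets (space M) Gz)"
  proof
    fix t show "sigma_sets (space M) (\<Union>i\<in>I t. E i) = case_bool (sets F) (sigma_sets (space M) Gz) t"
      by (cases t) (simp_all only: e1 e2 e3 bool.case)
  qed
  with i1 have i2: "indep_sets (case_bool (sets F) (sigma_sets (space M) Gz)) UNIV" by simp
  have GzP: "Gz \<subseteq> Pow (space M)" by (auto simp: Gz_def)
  have zs: "\<zeta> j \<in> measurable (sigma (space M) Gz) Pz" if "j < b" for j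
  proof (rule measurableI)
    fix x assume "x \<in> space (sigma (space M) Gz)"
    then show "\<zeta> j x \<in> space Pz" using zm[of j] GzP by (auto simp: measurable_def space_measure_of_conv)
  next
    fix A assume "A \<in> sets Pz"
    then have "\<zeta> j -` A \<inter> space M \<in> Gz" using that by (auto simp: Gz_def)
    then show "\<zeta> j -` A \<inter> space (sigma (space M) Gz) \<in> sets (sigma (space M) Gz)"
      using GzP by auto
  qed
  have Ys: "(\<lambda>\<omega>. \<lambda>j\<in>{..<b}. \<zeta> j \<omega>) \<in> measurable (sigma (space M) Gz) (PiM {..<b} (\<lambda>_. Pz))"
    by (rule measurable_restrict) (use zs in auto)
  have sub: "{(\<lambda>\<omega>. \<lambda>j\<in>{..<b}. \<zeta> j \<omega>) -` B \<inter> space M | B. B \<in> sets (PiM {..<b} (\<lambda>_. Pz))} \<subseteq> sigma_sets (space M) Gz"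
    using measurable_sets[OF Ys] GzP by auto
  show ?thesis unfolding indep_set_def
    by (rule indep_sets_mono_sets[OF i2]) (use sub in \<open>auto split: bool.split\<close>)
qed

lemma batch_distr:
  fixes \<zeta> :: "nat \<Rightarrow> 'w \<Rightarrow> 'z"
  assumes M: "prob_space M" and b: "b \<ge> 1"
    and zm: "\<And>j. \<zeta> j \<in> measurable M Pz"
    and zd: "\<And>j. distr M Pz (\<zeta> j) = Pz"
    and ind: "prob_space.indep_sets M (\<lambda>i. case i of None \<Rightarrow> sets F
                    | Some j \<Rightarrow> {\<zeta> j -` A \<inter> space M | A. A \<in> sets Pz}) (insert None (Some ` {..<b}))"
  shows "distr M (PiM {..<b} (\<lambda>_. Pz)) (\<lambda>\<omega>. \<lambda>j\<in>{..<b}. \<zeta> j \<omega>) = PiM {..<b} (\<lambda>_. Pz)"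
proof -
  interpret prob_space M by fact
  have "indep_sets (\<lambda>i. case i of None \<Rightarrow> sets F
                    | Some j \<Rightarrow> {\<zeta> j -` A \<inter> space M | A. A \<in> sets Pz}) (Some ` {..<b})"
    by (rule indep_sets_mono_index[OF _ ind]) auto
  from indep_sets_reindex_inj[OF M this]
  have "indep_sets (\<lambda>j. {\<zeta> j -` A \<inter> space M | A. A \<in> sets Pz}) {..<b}" by simp
  then have iv: "indep_vars (\<lambda>_. Pz) \<zeta> {..<b}" unfolding indep_vars_def2 using zm by auto
  have ne: "{..<b} \<noteq> {}" using b by (simp add: lessThan_empty_iff)
  have "distr M (PiM {..<b} (\<lambda>_. Pz)) (\<lambda>\<omega>. \<lambda>j\<in>{..<b}. \<zeta> j \<omega>) = PiM {..<b} (\<lambda>j. distr M Pz (\<zeta> j))"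
    using indep_vars_iff_distr_eq_PiM[OF ne, where M'="\<lambda>_. Pz" and X=\<zeta>] zm iv by auto
  then show ?thesis by (simp add: zd)
qed

lemma batch_Wfun:
  fixes Gb :: "'e::real_vector \<Rightarrow> 'z \<Rightarrow> 'e"
  assumes b: "b \<ge> 1"
  shows "(1 / real b) *\<^sub>R (\<Sum>j<b. Wfun Gb G a a' a'' (zk j \<omega>))
    = 2 *\<^sub>R batch_op Gb b zk a \<omega> - 3 *\<^sub>R batch_op Gb b zk a' \<omega> + batch_op Gb b zk a'' \<omega> - (2 *\<^sub>R G a - 3 *\<^sub>R G a' + G a'')"
proof -
  have s: "(\<Sum>j<b. Wfun Gb G a a' a'' (zk j \<omega>)) = 2 *\<^sub>R (\<Sum>j<b. Gb a (zk j \<omega>)) - 3 *\<^sub>R (\<Sum>j<b. Gb a' (zk j \<omega>)) + (\<Sum>j<b. Gb a'' (zk j \<omega>))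
      - real b *\<^sub>R (2 *\<^sub>R G a - 3 *\<^sub>R G a' + G a'')"
    by (simp add: Wfun_def sum.distrib sum_subtractf scaleR_sum_right scaleR_diff_right scaleR_add_right sum_constant_scaleR)
  have bz: "real b \<noteq> 0" using b by simp
  show ?thesis unfolding s batch_op_def
    using b by (simp add: scaleR_diff_right scaleR_add_right bz)
qed

lemma est_identity:
  fixes Gb :: "'e::real_vector \<Rightarrow> 'z \<Rightarrow> 'e"
  assumes b: "b \<ge> 1"
  shows "vr_est Gb G b x C \<zeta> Sbar k \<omega> - frb_S G x k \<omega> =
    (if \<omega> \<in> C k then Sbar k \<omega> - frb_S G x k \<omega>
     else (if k = 0 then 0 else vr_est Gb G b x C \<zeta> Sbar (k - 1) \<omega> - frb_S G x (k - 1) \<omega>)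
       + (1 / real b) *\<^sub>R (\<Sum>j<b. Wfun Gb G (x k \<omega>) (x (k - 1) \<omega>) (x (k - 2) \<omega>) (\<zeta> k j \<omega>)))"
proof (cases k)
  have h3: "(3::real) *\<^sub>R v = v + (v + v)" for v :: 'e
    using scaleR_add_left[of 1 2 v] by (simp add: scaleR_2)
  case 0
  show ?thesis unfolding 0 batch_Wfun[OF b]
    by (simp add: vr_step_def frb_S_def algebra_simps h3 scaleR_2)
next
  case (Suc m)
  have h3: "(3::real) *\<^sub>R v = v + (v + v)" for v :: 'e
    using scaleR_add_left[of 1 2 v] by (simp add: scaleR_2)
  have m2: "Suc m - 2 = m - 1" by simp
  show ?thesis unfolding Suc batch_Wfun[OF b]
    by (simp add: vr_step_def frb_S_def m2 algebra_simps h3 scaleR_2)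
qed

lemma enn2real_combo:
  assumes "A \<noteq> \<infinity>" "B \<noteq> \<infinity>" "0 \<le> p" "p \<le> 1"
  shows "enn2real (ennreal p * A + ennreal (1 - p) * B) = p * enn2real A + (1 - p) * enn2real B"
proof -
  have "ennreal p * A < top" "ennreal (1 - p) * B < top"
    using assms by (simp_all add: ennreal_mult_eq_top_iff less_top[symmetric])
  then show ?thesis using assms by (simp add: enn2real_plus enn2real_mult)
qed

theorem mainTheorem7:
  fixes M :: "'w measure" and F :: "nat \<Rightarrow> 'w measure"
    and Pz :: "'z measure" and Gb :: "'e::euclidean_space \<Rightarrow> 'z \<Rightarrow> 'e" and G :: "'e \<Rightarrow> 'e"
    and \<sigma> L :: real
    and T :: "'e \<Rightarrow> 'e set" and \<eta> :: real and x0 :: 'e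
    and x :: "nat \<Rightarrow> 'w \<Rightarrow> 'e"
    and p :: real and b :: nat
    and C :: "nat \<Rightarrow> 'w set" and \<zeta> :: "nat \<Rightarrow> nat \<Rightarrow> 'w \<Rightarrow> 'z"
    and Sbar :: "nat \<Rightarrow> 'w \<Rightarrow> 'e" and \<sigma>k :: "nat \<Rightarrow> real"
  assumes M: "prob_space M"
    \<comment> \<open>setting (E): G x = E_zeta[G(x,zeta)]\<close>
    and Pz: "prob_space Pz"
    and Gb_meas: "(\<lambda>(y, z). Gb y z) \<in> borel_measurable (borel \<Otimes>\<^sub>M Pz)"
    and Gb_int: "\<And>y. integrable Pz (Gb y)"
    and G_def: "\<And>y. G y = (\<integral>z. Gb y z \<partial>Pz)"
    \<comment> \<open>Assumption A(b), A(c)\<close>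
    and A_b: "\<And>y. (\<integral>\<^sup>+z. ennreal ((norm (Gb y z - G y))\<^sup>2) \<partial>Pz) \<le> ennreal (\<sigma>\<^sup>2)"
    and A_c: "\<And>y y'. (\<integral>\<^sup>+z. ennreal ((norm (Gb y z - Gb y' z))\<^sup>2) \<partial>Pz) \<le> ennreal (L\<^sup>2 * (norm (y - y'))\<^sup>2)"
    \<comment> \<open>the scheme VrFRBS with this estimator\<close>
    and eta: "\<eta> > 0"
    and xi0: "T x0 \<noteq> {}"
    and x_0: "\<And>\<omega>. \<omega> \<in> space M \<Longrightarrow> x 0 \<omega> = x0"
    and x_step: "\<And>k \<omega>. \<omega> \<in> space M \<Longrightarrow>
        (1 / \<eta>) *\<^sub>R (x k \<omega> - \<eta> *\<^sub>R vr_est Gb G b x C \<zeta> Sbar k \<omega> - x (Suc k) \<omega>) \<in> T (x (Suc k) \<omega>)"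
    \<comment> \<open>filtration: F k = randomness up to iteration k\<close>
    and F_sub: "\<And>k. subalgebra M (F k)"
    and F_mono: "\<And>k. sets (F k) \<subseteq> sets (F (Suc k))"
    and x_meas: "\<And>k. x k \<in> borel_measurable (F k)"
    and x_int: "\<And>k. integrable M (x k)"
    and C_meas: "\<And>k. C k \<in> sets (F (Suc k))"
    and \<zeta>_meas: "\<And>k j. \<zeta> k j \<in> measurable (F (Suc k)) Pz"
    and Sbar_meas: "\<And>k. Sbar k \<in> borel_measurable (F (Suc k))"
    \<comment> \<open>parameters\<close>
    and p: "p \<in> {0<..1}" and b: "b \<ge> 1"
    \<comment> \<open>fresh i.i.d. mini-batch of size b, independent of the past\<close>
    and \<zeta>_distr: "\<And>k j. distr M Pz (\<zeta> k j) = Pz"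
    and \<zeta>_indep: "\<And>k. prob_space.indep_sets M
        (\<lambda>i. case i of None \<Rightarrow> sets (F k)
                    | Some j \<Rightarrow> {\<zeta> k j -` A \<inter> space M | A. A \<in> sets Pz})
        (insert None (Some ` {..<b}))"
    \<comment> \<open>the coin: refresh with probability p, drawn independently of everything else\<close>
    and C_prob: "\<And>k. measure M (C k) = p"
    and C_indep: "\<And>k. prob_space.indep_set M {C k}
        (sigma_sets (space M)
          (sets (F k) \<union> (\<Union>j<b. {\<zeta> k j -` A \<inter> space M | A. A \<in> sets Pz})
             \<union> {Sbar k -` A \<inter> space M | A. A \<in> sets borel}))"
    \<comment> \<open>E_k[Sbar^k] = S^k and E_k |Sbar^k - S^k|^2 \<le> sigma_k^2\<close>
    and Sbar_mean: "\<And>k i. i \<in> Basis \<Longrightarrow> AE \<omega> in M.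
        real_cond_exp M (F k) (\<lambda>\<omega>. Sbar k \<omega> \<bullet> i) \<omega> = frb_S G x k \<omega> \<bullet> i"
    and Sbar_var: "\<And>k. AE \<omega> in M.
        nn_cond_exp M (F k) (\<lambda>\<omega>. ennreal ((norm (Sbar k \<omega> - frb_S G x k \<omega>))\<^sup>2)) \<omega> \<le> ennreal ((\<sigma>k k)\<^sup>2)"
  shows "classB M F x
           (\<lambda>k \<omega>. vr_est Gb G b x C \<zeta> Sbar k \<omega> - frb_S G x k \<omega>)
           (\<lambda>k \<omega>. (norm (vr_est Gb G b x C \<zeta> Sbar k \<omega> - frb_S G x k \<omega>))\<^sup>2)
           p p (8 * (1 - p) * L\<^sup>2 / real b) (2 * (1 - p) * L\<^sup>2 / real b) (\<lambda>k. p * (\<sigma>k k)\<^sup>2)"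
proof -
  interpret prob_space M by (rule M)
  interpret GS: Gsetting Pz Gb G L using Pz Gb_meas Gb_int G_def A_c by (simp add: Gsetting_def)
  define est where "est = vr_est Gb G b x C \<zeta> Sbar"
  define S where "S = frb_S G x"
  define e where "e = (\<lambda>k \<omega>. est k \<omega> - S k \<omega>)"
  define ep where "ep = (\<lambda>k \<omega>. if k = 0 then 0 else e (k - 1) \<omega>)"
  have ident: "e k \<omega> = (if \<omega> \<in> C k then Sbar k \<omega> - S k \<omega> else ep k \<omega> + (1 / real b) *\<^sub>R (\<Sum>j<b. Wfun Gb G (x k \<omega>) (x (k - 1) \<omega>) (x (k - 2) \<omega>) (\<zeta> k j \<omega>)))" for k \<omega>
    unfolding e_def ep_def est_def S_def using est_identity[OF b, of Gb G x C \<zeta> Sbar k \<omega>] by simp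
  have sF: "space (F k) = space M" for k using F_sub[of k] by (auto simp: subalgebra_def)
  have Fle: "subalgebra (F k) (F j)" if "j \<le> k" for j k
  proof -
    have "sets (F j) \<subseteq> sets (F k)" using lift_Suc_mono_le[of "\<lambda>k. sets (F k)", OF F_mono that] .
    then show ?thesis by (simp add: subalgebra_def sF)
  qed
  have xF: "x j \<in> borel_measurable (F k)" if "j \<le> k" for j k
    by (rule measurable_from_subalg[OF Fle[OF that] x_meas])
  have Gbc[measurable (raw)]: "\<And>f g N. f \<in> borel_measurable N \<Longrightarrow> g \<in> measurable N Pz \<Longrightarrow> (\<lambda>\<omega>. Gb (f \<omega>) (g \<omega>)) \<in> borel_measurable N"
    by (rule Gb_comp[OF Gb_meas])
  note GS.G_borel[measurable]
  have vs: "(\<lambda>\<omega>. vr_step Gb b x C \<zeta> Sbar k (P \<omega>) \<omega>) \<in> borel_measurable (F (Suc k))"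
    if P: "P \<in> borel_measurable (F (Suc k))" for k P
  proof -
    have [measurable]: "x k \<in> borel_measurable (F (Suc k))" "x (k - 1) \<in> borel_measurable (F (Suc k))"
      "x (k - 2) \<in> borel_measurable (F (Suc k))" "P \<in> borel_measurable (F (Suc k))"
      "C k \<in> sets (F (Suc k))" "Sbar k \<in> borel_measurable (F (Suc k))"
      "\<And>j. \<zeta> k j \<in> measurable (F (Suc k)) Pz"
      using xF P C_meas Sbar_meas \<zeta>_meas by auto
    show ?thesis unfolding vr_step_def batch_op_def by measurable
  qed
  have est_meas: "est k \<in> borel_measurable (F (Suc k))" for k
  proof (induction k)
    case 0
    have [measurable]: "x 0 \<in> borel_measurable (F (Suc 0))" using xF by auto
    have "(\<lambda>\<omega>. vr_step Gb b x C \<zeta> Sbar 0 (G (x 0 \<omega>)) \<omega>) \<in> borel_measurable (F (Suc 0))"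
      by (rule vs) measurable
    then show ?case by (simp add: est_def)
  next
    case (Suc k)
    have "est k \<in> borel_measurable (F (Suc (Suc k)))"
      by (rule measurable_from_subalg[OF Fle Suc]) simp
    then have "(\<lambda>\<omega>. vr_step Gb b x C \<zeta> Sbar (Suc k) (est k \<omega>) \<omega>) \<in> borel_measurable (F (Suc (Suc k)))"
      by (rule vs)
    then show ?case by (simp add: est_def)
  qed
  have S_meas: "S k \<in> borel_measurable (F k)" for k
  proof -
    have [measurable]: "x k \<in> borel_measurable (F k)" "x (k - 1) \<in> borel_measurable (F k)" using xF by auto
    show ?thesis unfolding S_def frb_S_def[abs_def] by measurable
  qed
  have e_meas: "e k \<in> borel_measurable (F (Suc k))" for k
  proof -
    have [measurable]: "est k \<in> borel_measurable (F (Suc k))" by (rule est_meas)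
    have [measurable]: "S k \<in> borel_measurable (F (Suc k))" by (rule measurable_from_subalg[OF Fle S_meas]) simp
    show ?thesis unfolding e_def by measurable
  qed
  have ep_meas: "ep k \<in> borel_measurable (F k)" for k
  proof (cases k)
    case 0 then show ?thesis by (simp add: ep_def)
  next
    case (Suc m)
    then show ?thesis using e_meas[of m] by (simp add: ep_def)
  qed
  have toM: "f \<in> measurable (F k) N \<Longrightarrow> f \<in> measurable M N" for f k and N :: "'q measure"
    by (rule measurable_from_subalg[OF F_sub])
  have Gx_int: "integrable M (\<lambda>\<omega>. G (x j \<omega>))" for j
  proof (rule Bochner_Integration.integrable_bound)
    show "integrable M (\<lambda>\<omega>. norm (G 0) + \<bar>L\<bar> * norm (x j \<omega>))" using x_int[of j] by auto
    show "(\<lambda>\<omega>. G (x j \<omega>)) \<in> borel_measurable M" using toM[OF x_meas[of j]] by measurable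
    show "AE \<omega> in M. norm (G (x j \<omega>)) \<le> norm (norm (G 0) + \<bar>L\<bar> * norm (x j \<omega>))"
    proof (rule AE_I2)
      fix \<omega>
      have "norm (G (x j \<omega>)) \<le> norm (G 0) + norm (G (x j \<omega>) - G 0)" by (rule norm_triangle_sub)
      also have "\<dots> \<le> norm (G 0) + \<bar>L\<bar> * norm (x j \<omega>)" using GS.G_lip[of "x j \<omega>" 0] by simp
      finally show "norm (G (x j \<omega>)) \<le> norm (norm (G 0) + \<bar>L\<bar> * norm (x j \<omega>))" by simp
    qed
  qed
  have S_int: "integrable M (S k)" for k
    unfolding S_def frb_S_def[abs_def] using Gx_int by auto
  have e_measM: "e k \<in> borel_measurable M" for k by (rule toM[OF e_meas])
  have perk: "(\<forall>i\<in>Basis. AE \<omega> in M. real_cond_exp M (F k) (\<lambda>\<omega>. e k \<omega> \<bullet> i) \<omega> = (1 - p) * (ep k \<omega> \<bullet> i)) \<and>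
      (AE \<omega> in M. nn_cond_exp M (F k) (\<lambda>\<omega>. ennreal ((norm (e k \<omega>))\<^sup>2)) \<omega>
      \<le> ennreal ((1 - p) * (norm (ep k \<omega>))\<^sup>2 + 8 * (1 - p) * L\<^sup>2 / real b * (norm (x k \<omega> - x (k - 1) \<omega>))\<^sup>2
          + 2 * (1 - p) * L\<^sup>2 / real b * (norm (x (k - 1) \<omega> - x (k - 2) \<omega>))\<^sup>2 + p * (\<sigma>k k)\<^sup>2))" for k
  proof -
    define N where "N = (borel \<Otimes>\<^sub>M (borel \<Otimes>\<^sub>M (borel \<Otimes>\<^sub>M borel)) :: ('e \<times> 'e \<times> 'e \<times> 'e) measure)"
    define Q where "Q = PiM {..<b} (\<lambda>_::nat. Pz)"
    define U where "U = (\<lambda>\<omega>. (ep k \<omega>, x k \<omega>, x (k - 1) \<omega>, x (k - 2) \<omega>))"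
    define Y where "Y = (\<lambda>\<omega>. \<lambda>j\<in>{..<b}. \<zeta> k j \<omega>)"
    define \<Psi> where "\<Psi> = (\<lambda>(u::'e \<times> 'e \<times> 'e \<times> 'e, y::nat \<Rightarrow> 'z). fst u + (1 / real b) *\<^sub>R (\<Sum>j<b. Wfun Gb G (fst (snd u)) (fst (snd (snd u))) (snd (snd (snd u))) (y j)))"
    define d where "d = (\<lambda>\<omega>. Sbar k \<omega> - S k \<omega>)"
    have e\<Psi>: "e k \<omega> = (if \<omega> \<in> C k then d \<omega> else \<Psi> (U \<omega>, Y \<omega>))" for \<omega>
    proof -
      have "(\<Sum>j<b. Wfun Gb G (x k \<omega>) (x (k - 1) \<omega>) (x (k - 2) \<omega>) (Y \<omega> j)) = (\<Sum>j<b. Wfun Gb G (x k \<omega>) (x (k - 1) \<omega>) (x (k - 2) \<omega>) (\<zeta> k j \<omega>))"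
        by (rule sum.cong) (auto simp: Y_def)
      then show ?thesis by (simp add: ident d_def \<Psi>_def U_def)
    qed
    have \<Psi>_at: "\<Psi> (U \<omega>, y) = ep k \<omega> + (1 / real b) *\<^sub>R (\<Sum>j<b. Wfun Gb G (x k \<omega>) (x (k - 1) \<omega>) (x (k - 2) \<omega>) (y j))" for \<omega> y
      by (simp add: \<Psi>_def U_def)
    have [measurable]: "x k \<in> borel_measurable (F k)" "x (k - 1) \<in> borel_measurable (F k)" "x (k - 2) \<in> borel_measurable (F k)"
      "ep k \<in> borel_measurable (F k)" using xF ep_meas by auto
    have U_meas: "U \<in> measurable (F k) N" unfolding U_def N_def by measurable
    have zM: "\<zeta> k j \<in> measurable M Pz" for j by (rule toM[OF \<zeta>_meas])
    have Y_meas: "Y \<in> measurable M Q" unfolding Y_def Q_def by (rule measurable_restrict) (rule zM)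
    have \<Psi>_meas: "\<Psi> \<in> borel_measurable (N \<Otimes>\<^sub>M Q)"
    proof -
      have sm: "(\<lambda>p. \<Sum>j<b. Wfun Gb G (fst (snd (fst p))) (fst (snd (snd (fst p)))) (snd (snd (snd (fst p)))) (snd p j))
          \<in> borel_measurable (N \<Otimes>\<^sub>M Q)"
      proof (rule borel_measurable_sum)
        fix j assume j: "j \<in> {..<b}"
        have sj: "(\<lambda>p. snd p j) \<in> measurable (N \<Otimes>\<^sub>M Q) Pz"
          using measurable_compose[OF measurable_snd measurable_component_singleton[of j "{..<b}" "\<lambda>_. Pz"]] j
          by (simp add: Q_def)
        note sj' [measurable] = sj[unfolded N_def]
        show "(\<lambda>p. Wfun Gb G (fst (snd (fst p))) (fst (snd (snd (fst p)))) (snd (snd (snd (fst p)))) (snd p j)) \<in> borel_measurable (N \<Otimes>\<^sub>M Q)"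
          unfolding Wfun_def N_def by measurable
      qed
      note sm' [measurable] = sm[unfolded N_def]
      show ?thesis unfolding \<Psi>_def N_def by (simp add: case_prod_beta') measurable
    qed
    have indF: "indep_set (sets (F k)) {Y -` B \<inter> space M | B. B \<in> sets Q}"
      unfolding Y_def Q_def by (rule batch_indep[OF M F_sub zM \<zeta>_indep])
    have dY: "distr M Q Y = Q"
      unfolding Y_def Q_def by (rule batch_distr[OF M b zM \<zeta>_distr \<zeta>_indep])
    define Gen where "Gen = sets (F k) \<union> (\<Union>j<b. {\<zeta> k j -` A \<inter> space M | A. A \<in> sets Pz}) \<union> {Sbar k -` A \<inter> space M | A. A \<in> sets borel}"
    define H where "H = sigma (space M) Gen"
    have GenP: "Gen \<subseteq> Pow (space M)" unfolding Gen_def using sets.sets_into_space[of _ "F k"] sF[of k] by auto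
    have SbarM: "Sbar k \<in> borel_measurable M" by (rule toM[OF Sbar_meas])
    have GenM: "Gen \<subseteq> sets M"
      unfolding Gen_def using F_sub[of k] measurable_sets[OF zM] measurable_sets[OF SbarM]
      by (auto simp: subalgebra_def)
    have sH: "sets H = sigma_sets (space M) Gen" unfolding H_def using GenP by (rule sets_measure_of)
    have spH: "space H = space M" unfolding H_def using GenP by (rule space_measure_of)
    have HM: "subalgebra M H" unfolding subalgebra_def using sH spH sets.sigma_sets_subset[OF GenM] by auto
    have HF: "subalgebra H (F k)" unfolding subalgebra_def sH spH sF
      using sigma_sets.Basic[of _ Gen "space M"] by (auto simp: Gen_def)
    have indC: "indep_set {C k} (sets H)" unfolding sH Gen_def using C_indep[of k] by simp
    have CM: "C k \<in> sets M" using C_meas[of k] F_sub[of "Suc k"] by (auto simp: subalgebra_def)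
    have zH: "\<zeta> k j \<in> measurable H Pz" if "j < b" for j
    proof (rule measurableI)
      fix \<omega> assume "\<omega> \<in> space H" then show "\<zeta> k j \<omega> \<in> space Pz" using zM[of j] spH by (auto simp: measurable_def)
    next
      fix A assume "A \<in> sets Pz"
      then have "\<zeta> k j -` A \<inter> space M \<in> Gen" using that by (auto simp: Gen_def)
      then show "\<zeta> k j -` A \<inter> space H \<in> sets H" using sH spH by auto
    qed
    have SbH: "Sbar k \<in> borel_measurable H"
    proof (rule measurableI)
      fix \<omega> assume "\<omega> \<in> space H" then show "Sbar k \<omega> \<in> space borel" by simp
    next
      fix A :: "'e set" assume "A \<in> sets borel"
      then have "Sbar k -` A \<inter> space M \<in> Gen" by (auto simp: Gen_def)
      then show "Sbar k -` A \<inter> space H \<in> sets H" using sH spH by auto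
    qed
    have YH: "Y \<in> measurable H Q" unfolding Y_def Q_def by (rule measurable_restrict) (use zH in auto)
    have UH: "U \<in> measurable H N" by (rule measurable_from_subalg[OF HF U_meas])
    have SH: "S k \<in> borel_measurable H" by (rule measurable_from_subalg[OF HF S_meas])
    have dH: "d \<in> borel_measurable H" unfolding d_def using SbH SH by measurable
    have split: "AE \<omega> in M. nn_cond_exp M (F k) (\<lambda>\<omega>. g (e k \<omega>)) \<omega>
        = ennreal p * nn_cond_exp M (F k) (\<lambda>\<omega>. g (d \<omega>)) \<omega> + ennreal (1 - p) * (\<integral>\<^sup>+y. g (\<Psi> (U \<omega>, y)) \<partial>Q)"
      if g[measurable]: "g \<in> borel_measurable borel" for g :: "'e \<Rightarrow> ennreal"
    proof -
      have UYH: "(\<lambda>\<omega>. (U \<omega>, Y \<omega>)) \<in> measurable H (N \<Otimes>\<^sub>M Q)" using UH YH by measurable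
      have h1: "(\<lambda>\<omega>. g (d \<omega>)) \<in> borel_measurable H" using dH by measurable
      have h2: "(\<lambda>\<omega>. g (\<Psi> (U \<omega>, Y \<omega>))) \<in> borel_measurable H"
        using measurable_compose[OF measurable_compose[OF UYH \<Psi>_meas] g] by simp
      have 1: "AE \<omega> in M. nn_cond_exp M (F k) (\<lambda>\<omega>. if \<omega> \<in> C k then g (d \<omega>) else g (\<Psi> (U \<omega>, Y \<omega>))) \<omega>
         = ennreal p * nn_cond_exp M (F k) (\<lambda>\<omega>. g (d \<omega>)) \<omega> + ennreal (1 - p) * nn_cond_exp M (F k) (\<lambda>\<omega>. g (\<Psi> (U \<omega>, Y \<omega>))) \<omega>"
        by (rule coin_split[OF M F_sub HM HF CM indC C_prob h1 h2])
      have fm: "(\<lambda>z. g (\<Psi> z)) \<in> borel_measurable (N \<Otimes>\<^sub>M Q)" using \<Psi>_meas by measurable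
      have 2: "AE \<omega> in M. nn_cond_exp M (F k) (\<lambda>\<omega>. g (\<Psi> (U \<omega>, Y \<omega>))) \<omega> = (\<integral>\<^sup>+y. g (\<Psi> (U \<omega>, y)) \<partial>distr M Q Y)"
        by (rule cond_freeze[OF M F_sub U_meas Y_meas indF fm])
      have eq: "(\<lambda>\<omega>. g (e k \<omega>)) = (\<lambda>\<omega>. if \<omega> \<in> C k then g (d \<omega>) else g (\<Psi> (U \<omega>, Y \<omega>)))"
        by (auto simp: e\<Psi>)
      show ?thesis using 1 2 unfolding eq dY by eventually_elim simp
    qed
    interpret FS: finite_measure_subalgebra M "F k" by unfold_locales (rule F_sub)
    have p0: "0 \<le> p" "p \<le> 1" using p by auto
    have bpos: "real b > 0" using b by simp
    have [measurable]: "S k \<in> borel_measurable M" by (rule toM[OF S_meas])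
    have [measurable]: "Sbar k \<in> borel_measurable M" by (rule SbarM)
    have dM[measurable]: "d \<in> borel_measurable M" unfolding d_def by measurable
    have e_kM[measurable]: "e k \<in> borel_measurable M" by (rule e_measM)
    have intC: "(\<integral>\<^sup>+y. ennreal ((norm (\<Psi> (U \<omega>, y)))\<^sup>2) \<partial>Q)
        \<le> ennreal ((norm (ep k \<omega>))\<^sup>2 + (8 * L\<^sup>2 * (norm (x k \<omega> - x (k - 1) \<omega>))\<^sup>2 + 2 * L\<^sup>2 * (norm (x (k - 1) \<omega> - x (k - 2) \<omega>))\<^sup>2) / real b)" for \<omega>
    proof -
      define Wf where "Wf = Wfun Gb G (x k \<omega>) (x (k - 1) \<omega>) (x (k - 2) \<omega>)"
      define W where "W = (\<lambda>z. (1 / real b) *\<^sub>R Wf z)"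
      define B where "B = 8 * L\<^sup>2 * (norm (x k \<omega> - x (k - 1) \<omega>))\<^sup>2 + 2 * L\<^sup>2 * (norm (x (k - 1) \<omega> - x (k - 2) \<omega>))\<^sup>2"
      define K where "K = (\<integral>\<^sup>+z. ennreal ((norm (Wf z))\<^sup>2) \<partial>Pz)"
      have Wfm[measurable]: "Wf \<in> borel_measurable Pz" unfolding Wf_def by (rule GS.Wfun_meas)
      have Wm: "W \<in> borel_measurable Pz" unfolding W_def by measurable
      have Wi: "integrable Pz W" unfolding W_def Wf_def using GS.Wfun_int by auto
      have W0: "integral\<^sup>L Pz W = 0" unfolding W_def Wf_def using GS.Wfun_mean by simp
      have KB: "K \<le> ennreal B" unfolding K_def Wf_def B_def by (rule GS.Wfun_sq)
      have Kf: "K \<noteq> \<infinity>" unfolding K_def Wf_def by (rule GS.Wfun_fin)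
      have Wsq: "(\<integral>\<^sup>+z. ennreal ((norm (W z))\<^sup>2) \<partial>Pz) = ennreal ((1 / real b)\<^sup>2) * K"
      proof -
        have "(\<integral>\<^sup>+z. ennreal ((norm (W z))\<^sup>2) \<partial>Pz) = (\<integral>\<^sup>+z. ennreal ((1 / real b)\<^sup>2) * ennreal ((norm (Wf z))\<^sup>2) \<partial>Pz)"
        proof (rule nn_integral_cong)
          fix z
          have "(norm (W z))\<^sup>2 = (1 / real b)\<^sup>2 * (norm (Wf z))\<^sup>2"
            using bpos by (simp add: W_def power_divide)
          then show "ennreal ((norm (W z))\<^sup>2) = ennreal ((1 / real b)\<^sup>2) * ennreal ((norm (Wf z))\<^sup>2)"
            by (simp add: ennreal_mult)
        qed
        also have "\<dots> = ennreal ((1 / real b)\<^sup>2) * K" unfolding K_def by (rule nn_integral_cmult) measurable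
        finally show ?thesis .
      qed
      have Wf2: "(\<integral>\<^sup>+z. ennreal ((norm (W z))\<^sup>2) \<partial>Pz) \<noteq> \<infinity>" using Kf by (simp add: Wsq ennreal_mult_eq_top_iff)
      have "\<Psi> (U \<omega>, y) = ep k \<omega> + (\<Sum>j<b. W (y j))" for y
        by (simp add: \<Psi>_at W_def Wf_def scaleR_sum_right)
      then have "(\<integral>\<^sup>+y. ennreal ((norm (\<Psi> (U \<omega>, y)))\<^sup>2) \<partial>Q) = (\<integral>\<^sup>+y. ennreal ((norm (ep k \<omega> + (\<Sum>j<b. W (y j))))\<^sup>2) \<partial>Q)"
        by simp
      also have "\<dots> = ennreal ((norm (ep k \<omega>))\<^sup>2) + of_nat b * (ennreal ((1 / real b)\<^sup>2) * K)"
        unfolding Q_def using batch_sq[OF Pz Wm Wi W0 Wf2, where c="ep k \<omega>" and n=b] by (simp add: Wsq)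
      also have "\<dots> \<le> ennreal ((norm (ep k \<omega>))\<^sup>2) + of_nat b * (ennreal ((1 / real b)\<^sup>2) * ennreal B)"
        by (intro add_left_mono mult_left_mono KB) auto
      also have "\<dots> = ennreal ((norm (ep k \<omega>))\<^sup>2 + B / real b)"
      proof -
        have B0: "0 \<le> B" unfolding B_def by simp
        have "of_nat b * (ennreal ((1 / real b)\<^sup>2) * ennreal B) = ennreal (real b * ((1 / real b)\<^sup>2 * B))"
          using B0 by (simp add: ennreal_mult ennreal_of_nat_eq_real_of_nat)
        also have "real b * ((1 / real b)\<^sup>2 * B) = B / real b" using bpos by (simp add: power2_eq_square field_simps)
        finally show ?thesis using B0 by (simp add: ennreal_plus)
      qed
      finally show ?thesis unfolding B_def .
    qed
    have splitC: "AE \<omega> in M. nn_cond_exp M (F k) (\<lambda>\<omega>. ennreal ((norm (e k \<omega>))\<^sup>2)) \<omega>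
        = ennreal p * nn_cond_exp M (F k) (\<lambda>\<omega>. ennreal ((norm (d \<omega>))\<^sup>2)) \<omega> + ennreal (1 - p) * (\<integral>\<^sup>+y. ennreal ((norm (\<Psi> (U \<omega>, y)))\<^sup>2) \<partial>Q)"
      by (rule split[of "\<lambda>v. ennreal ((norm v)\<^sup>2)"]) measurable
    have dvar: "AE \<omega> in M. nn_cond_exp M (F k) (\<lambda>\<omega>. ennreal ((norm (d \<omega>))\<^sup>2)) \<omega> \<le> ennreal ((\<sigma>k k)\<^sup>2)"
      using Sbar_var[of k] by (simp add: d_def S_def)
    have cC: "AE \<omega> in M. nn_cond_exp M (F k) (\<lambda>\<omega>. ennreal ((norm (e k \<omega>))\<^sup>2)) \<omega>
      \<le> ennreal ((1 - p) * (norm (ep k \<omega>))\<^sup>2 + 8 * (1 - p) * L\<^sup>2 / real b * (norm (x k \<omega> - x (k - 1) \<omega>))\<^sup>2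
          + 2 * (1 - p) * L\<^sup>2 / real b * (norm (x (k - 1) \<omega> - x (k - 2) \<omega>))\<^sup>2 + p * (\<sigma>k k)\<^sup>2)"
      using splitC dvar
    proof eventually_elim
      case (elim \<omega>)
      define R where "R = (norm (ep k \<omega>))\<^sup>2 + (8 * L\<^sup>2 * (norm (x k \<omega> - x (k - 1) \<omega>))\<^sup>2 + 2 * L\<^sup>2 * (norm (x (k - 1) \<omega> - x (k - 2) \<omega>))\<^sup>2) / real b"
      have R0: "0 \<le> R" unfolding R_def using bpos by simp
      have "nn_cond_exp M (F k) (\<lambda>\<omega>. ennreal ((norm (e k \<omega>))\<^sup>2)) \<omega> \<le> ennreal p * ennreal ((\<sigma>k k)\<^sup>2) + ennreal (1 - p) * ennreal R"
        unfolding elim(1) R_def by (intro add_mono mult_left_mono elim(2) intC) auto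
      also have "\<dots> = ennreal (p * (\<sigma>k k)\<^sup>2 + (1 - p) * R)"
        using p0 R0 by (simp add: ennreal_mult ennreal_plus)
      also have "p * (\<sigma>k k)\<^sup>2 + (1 - p) * R = (1 - p) * (norm (ep k \<omega>))\<^sup>2 + 8 * (1 - p) * L\<^sup>2 / real b * (norm (x k \<omega> - x (k - 1) \<omega>))\<^sup>2
          + 2 * (1 - p) * L\<^sup>2 / real b * (norm (x (k - 1) \<omega> - x (k - 2) \<omega>))\<^sup>2 + p * (\<sigma>k k)\<^sup>2"
        unfolding R_def using bpos by (simp add: field_simps)
      finally show ?case .
    qed
    have cA: "AE \<omega> in M. real_cond_exp M (F k) (\<lambda>\<omega>. e k \<omega> \<bullet> i) \<omega> = (1 - p) * (ep k \<omega> \<bullet> i)" if i: "i \<in> Basis" for i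
    proof -
      have dsq: "(\<integral>\<^sup>+\<omega>. ennreal ((norm (d \<omega>))\<^sup>2) \<partial>M) \<le> ennreal ((\<sigma>k k)\<^sup>2)"
      proof -
        have "(\<integral>\<^sup>+\<omega>. ennreal ((norm (d \<omega>))\<^sup>2) \<partial>M) = (\<integral>\<^sup>+\<omega>. 1 * nn_cond_exp M (F k) (\<lambda>\<omega>. ennreal ((norm (d \<omega>))\<^sup>2)) \<omega> \<partial>M)"
          using FS.nn_cond_exp_intg[of "\<lambda>_. 1" "\<lambda>\<omega>. ennreal ((norm (d \<omega>))\<^sup>2)"] by simp
        also have "\<dots> \<le> (\<integral>\<^sup>+\<omega>. ennreal ((\<sigma>k k)\<^sup>2) \<partial>M)" by (rule nn_integral_mono_AE) (use dvar in auto)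
        also have "\<dots> = ennreal ((\<sigma>k k)\<^sup>2)" by (simp add: emeasure_space_1)
        finally show ?thesis .
      qed
      have nle: "n \<le> 1 + n\<^sup>2" if "0 \<le> n" for n :: real
      proof -
        have "0 \<le> (n - 1)\<^sup>2" by simp
        then have "2 * n \<le> 1 + n\<^sup>2" by (simp add: power2_eq_square algebra_simps)
        then show ?thesis using that by linarith
      qed
      have d_int: "integrable M d"
        unfolding integrable_iff_bounded
      proof
        show "d \<in> borel_measurable M" by measurable
        have "(\<integral>\<^sup>+\<omega>. ennreal (norm (d \<omega>)) \<partial>M) \<le> (\<integral>\<^sup>+\<omega>. 1 + ennreal ((norm (d \<omega>))\<^sup>2) \<partial>M)"
        proof (rule nn_integral_mono)
          fix \<omega>
          have "ennreal (norm (d \<omega>)) \<le> ennreal (1 + (norm (d \<omega>))\<^sup>2)" by (rule ennreal_leI) (rule nle, simp)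
          then show "ennreal (norm (d \<omega>)) \<le> 1 + ennreal ((norm (d \<omega>))\<^sup>2)" by (simp add: ennreal_plus)
        qed
        also have "\<dots> = 1 + (\<integral>\<^sup>+\<omega>. ennreal ((norm (d \<omega>))\<^sup>2) \<partial>M)"
          by (subst nn_integral_add) (auto simp: emeasure_space_1)
        also have "\<dots> \<le> 1 + ennreal ((\<sigma>k k)\<^sup>2)" using dsq by (rule add_left_mono)
        also have "\<dots> < \<infinity>" by (simp add: less_top[symmetric])
        finally show "(\<integral>\<^sup>+\<omega>. ennreal (norm (d \<omega>)) \<partial>M) < \<infinity>" .
      qed
      have Sbi: "integrable M (\<lambda>\<omega>. Sbar k \<omega> \<bullet> i)"
      proof -
        have "integrable M (\<lambda>\<omega>. d \<omega> + S k \<omega>)" using d_int S_int[of k] by auto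
        then have "integrable M (Sbar k)" by (simp add: d_def)
        then show ?thesis by auto
      qed
      have Si: "integrable M (\<lambda>\<omega>. S k \<omega> \<bullet> i)" using S_int[of k] by auto
      have dii: "integrable M (\<lambda>\<omega>. d \<omega> \<bullet> i)" using d_int by auto
      have rc_d: "AE \<omega> in M. real_cond_exp M (F k) (\<lambda>\<omega>. d \<omega> \<bullet> i) \<omega> = 0"
      proof -
        have eqd: "(\<lambda>\<omega>. d \<omega> \<bullet> i) = (\<lambda>\<omega>. Sbar k \<omega> \<bullet> i - S k \<omega> \<bullet> i)" by (simp add: d_def inner_diff_left)
        have 1: "AE \<omega> in M. real_cond_exp M (F k) (\<lambda>\<omega>. Sbar k \<omega> \<bullet> i - S k \<omega> \<bullet> i) \<omega>
            = real_cond_exp M (F k) (\<lambda>\<omega>. Sbar k \<omega> \<bullet> i) \<omega> - real_cond_exp M (F k) (\<lambda>\<omega>. S k \<omega> \<bullet> i) \<omega>"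
          by (rule FS.real_cond_exp_diff[OF Sbi Si])
        have SF: "(\<lambda>\<omega>. S k \<omega> \<bullet> i) \<in> borel_measurable (F k)" using S_meas[of k] by measurable
        have 2: "AE \<omega> in M. real_cond_exp M (F k) (\<lambda>\<omega>. S k \<omega> \<bullet> i) \<omega> = S k \<omega> \<bullet> i"
          by (rule FS.real_cond_exp_F_meas[OF Si SF])
        have 3: "AE \<omega> in M. real_cond_exp M (F k) (\<lambda>\<omega>. Sbar k \<omega> \<bullet> i) \<omega> = S k \<omega> \<bullet> i"
          using Sbar_mean[OF i, of k] by (simp add: S_def)
        show ?thesis unfolding eqd using 1 2 3 by eventually_elim simp
      qed
      have aP: "AE \<omega> in M. nn_cond_exp M (F k) (\<lambda>\<omega>. ennreal (d \<omega> \<bullet> i)) \<omega> \<noteq> \<infinity>"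
      proof (rule nn_integral_PInf_AE)
        have "(\<integral>\<^sup>+\<omega>. nn_cond_exp M (F k) (\<lambda>\<omega>. ennreal (d \<omega> \<bullet> i)) \<omega> \<partial>M) = (\<integral>\<^sup>+\<omega>. ennreal (d \<omega> \<bullet> i) \<partial>M)"
          using FS.nn_cond_exp_intg[of "\<lambda>_. 1" "\<lambda>\<omega>. ennreal (d \<omega> \<bullet> i)"] by simp
        then show "(\<integral>\<^sup>+\<omega>. nn_cond_exp M (F k) (\<lambda>\<omega>. ennreal (d \<omega> \<bullet> i)) \<omega> \<partial>M) \<noteq> \<infinity>"
          using integrableD(2)[OF dii] by simp
      qed simp
      have aN: "AE \<omega> in M. nn_cond_exp M (F k) (\<lambda>\<omega>. ennreal (- (d \<omega> \<bullet> i))) \<omega> \<noteq> \<infinity>"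
      proof (rule nn_integral_PInf_AE)
        have "(\<integral>\<^sup>+\<omega>. nn_cond_exp M (F k) (\<lambda>\<omega>. ennreal (- (d \<omega> \<bullet> i))) \<omega> \<partial>M) = (\<integral>\<^sup>+\<omega>. ennreal (- (d \<omega> \<bullet> i)) \<partial>M)"
          using FS.nn_cond_exp_intg[of "\<lambda>_. 1" "\<lambda>\<omega>. ennreal (- (d \<omega> \<bullet> i))"] by simp
        then show "(\<integral>\<^sup>+\<omega>. nn_cond_exp M (F k) (\<lambda>\<omega>. ennreal (- (d \<omega> \<bullet> i))) \<omega> \<partial>M) \<noteq> \<infinity>"
          using integrableD(3)[OF dii] by simp
      qed simp
      have bI: "integrable Q (\<lambda>y. \<Psi> (U \<omega>, y) \<bullet> i)" and bE: "(\<integral>y. \<Psi> (U \<omega>, y) \<bullet> i \<partial>Q) = ep k \<omega> \<bullet> i" for \<omega>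
      proof -
        note bm = batch_mean[OF Pz GS.Wfun_meas[of "x k \<omega>" "x (k - 1) \<omega>" "x (k - 2) \<omega>"]
            GS.Wfun_int[of "x k \<omega>" "x (k - 1) \<omega>" "x (k - 2) \<omega>"] GS.Wfun_mean[of "x k \<omega>" "x (k - 1) \<omega>" "x (k - 2) \<omega>"],
            where n=b and c="ep k \<omega>" and r="1 / real b"]
        have bi: "integrable Q (\<lambda>y. \<Psi> (U \<omega>, y))" unfolding \<Psi>_at Q_def by (rule bm(1))
        have be: "(\<integral>y. \<Psi> (U \<omega>, y) \<partial>Q) = ep k \<omega>" unfolding \<Psi>_at Q_def by (rule bm(2))
        show "integrable Q (\<lambda>y. \<Psi> (U \<omega>, y) \<bullet> i)" using bi by auto
        show "(\<integral>y. \<Psi> (U \<omega>, y) \<bullet> i \<partial>Q) = ep k \<omega> \<bullet> i" using bi be by simp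
      qed
      have bdiff: "enn2real (\<integral>\<^sup>+y. ennreal (\<Psi> (U \<omega>, y) \<bullet> i) \<partial>Q) - enn2real (\<integral>\<^sup>+y. ennreal (- (\<Psi> (U \<omega>, y) \<bullet> i)) \<partial>Q) = ep k \<omega> \<bullet> i" for \<omega>
        using real_lebesgue_integral_def[OF bI[of \<omega>]] bE[of \<omega>] by simp
      have splitP: "AE \<omega> in M. nn_cond_exp M (F k) (\<lambda>\<omega>. ennreal (e k \<omega> \<bullet> i)) \<omega>
          = ennreal p * nn_cond_exp M (F k) (\<lambda>\<omega>. ennreal (d \<omega> \<bullet> i)) \<omega> + ennreal (1 - p) * (\<integral>\<^sup>+y. ennreal (\<Psi> (U \<omega>, y) \<bullet> i) \<partial>Q)"
        by (rule split[of "\<lambda>v. ennreal (v \<bullet> i)"]) measurable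
      have splitN: "AE \<omega> in M. nn_cond_exp M (F k) (\<lambda>\<omega>. ennreal (- (e k \<omega> \<bullet> i))) \<omega>
          = ennreal p * nn_cond_exp M (F k) (\<lambda>\<omega>. ennreal (- (d \<omega> \<bullet> i))) \<omega> + ennreal (1 - p) * (\<integral>\<^sup>+y. ennreal (- (\<Psi> (U \<omega>, y) \<bullet> i)) \<partial>Q)"
        by (rule split[of "\<lambda>v. ennreal (- (v \<bullet> i))"]) measurable
      show ?thesis using splitP splitN aP aN rc_d
      proof eventually_elim
        case (elim \<omega>)
        have fP: "(\<integral>\<^sup>+y. ennreal (\<Psi> (U \<omega>, y) \<bullet> i) \<partial>Q) \<noteq> \<infinity>" using integrableD(2)[OF bI[of \<omega>]] .
        have fN: "(\<integral>\<^sup>+y. ennreal (- (\<Psi> (U \<omega>, y) \<bullet> i)) \<partial>Q) \<noteq> \<infinity>" using integrableD(3)[OF bI[of \<omega>]] .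
        have "real_cond_exp M (F k) (\<lambda>\<omega>. e k \<omega> \<bullet> i) \<omega>
            = enn2real (nn_cond_exp M (F k) (\<lambda>\<omega>. ennreal (e k \<omega> \<bullet> i)) \<omega>) - enn2real (nn_cond_exp M (F k) (\<lambda>\<omega>. ennreal (- (e k \<omega> \<bullet> i))) \<omega>)"
          by (simp add: real_cond_exp_def)
        also have "\<dots> = p * (enn2real (nn_cond_exp M (F k) (\<lambda>\<omega>. ennreal (d \<omega> \<bullet> i)) \<omega>) - enn2real (nn_cond_exp M (F k) (\<lambda>\<omega>. ennreal (- (d \<omega> \<bullet> i))) \<omega>))
            + (1 - p) * (enn2real (\<integral>\<^sup>+y. ennreal (\<Psi> (U \<omega>, y) \<bullet> i) \<partial>Q) - enn2real (\<integral>\<^sup>+y. ennreal (- (\<Psi> (U \<omega>, y) \<bullet> i)) \<partial>Q))"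
          unfolding elim(1) elim(2) using enn2real_combo[OF elim(3) fP p0] enn2real_combo[OF elim(4) fN p0]
          by (simp add: algebra_simps)
        also have "enn2real (nn_cond_exp M (F k) (\<lambda>\<omega>. ennreal (d \<omega> \<bullet> i)) \<omega>) - enn2real (nn_cond_exp M (F k) (\<lambda>\<omega>. ennreal (- (d \<omega> \<bullet> i))) \<omega>)
            = real_cond_exp M (F k) (\<lambda>\<omega>. d \<omega> \<bullet> i) \<omega>" by (simp add: real_cond_exp_def)
        finally show ?case using elim(5) bdiff[of \<omega>] by simp
      qed
    qed
    show ?thesis using cA cC by blast
  qed
  have condA: "AE \<omega> in M. real_cond_exp M (F k) (\<lambda>\<omega>. e k \<omega> \<bullet> i) \<omega> = (1 - p) * (ep k \<omega> \<bullet> i)"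
    if i: "i \<in> Basis" for k i
    using perk[of k] i by blast
  have condC: "AE \<omega> in M. nn_cond_exp M (F k) (\<lambda>\<omega>. ennreal ((norm (e k \<omega>))\<^sup>2)) \<omega>
      \<le> ennreal ((1 - p) * (norm (ep k \<omega>))\<^sup>2 + 8 * (1 - p) * L\<^sup>2 / real b * (norm (x k \<omega> - x (k - 1) \<omega>))\<^sup>2
          + 2 * (1 - p) * L\<^sup>2 / real b * (norm (x (k - 1) \<omega> - x (k - 2) \<omega>))\<^sup>2 + p * (\<sigma>k k)\<^sup>2)" for k
    using perk[of k] by blast
  have eq2: "vr_est Gb G b x C \<zeta> Sbar k \<omega> - frb_S G x k \<omega> = e k \<omega>" for k \<omega>
    by (simp add: e_def est_def S_def)
  have ep2: "(if k = 0 then 0 else e (k - 1) \<omega>) = ep k \<omega>" for k \<omega> by (simp add: ep_def)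
  have ep3: "(if k = 0 then 0 else (norm (e (k - 1) \<omega>))\<^sup>2) = (norm (ep k \<omega>))\<^sup>2" for k \<omega> by (simp add: ep_def)
  have pp: "p \<in> {0<..1}" by (rule p)
  show ?thesis
    unfolding classB_def eq2 ep2 ep3
  proof (intro conjI allI ballI)
    show "p \<in> {0<..1}" by (rule pp)
    show "p \<in> {0<..1}" by (rule pp)
    show "0 \<le> 8 * (1 - p) * L\<^sup>2 / real b" using pp by auto
    show "0 \<le> 2 * (1 - p) * L\<^sup>2 / real b" using pp by auto
    fix k
    show "0 \<le> p * (\<sigma>k k)\<^sup>2" using pp by auto
    show "(\<lambda>\<omega>. (norm (e k \<omega>))\<^sup>2) \<in> borel_measurable M" using e_measM[of k] by measurable
    show "AE \<omega> in M. nn_cond_exp M (F k) (\<lambda>\<omega>. ennreal ((norm (e k \<omega>))\<^sup>2)) \<omega> \<le> nn_cond_exp M (F k) (\<lambda>\<omega>. ennreal ((norm (e k \<omega>))\<^sup>2)) \<omega>"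
      by simp
    show "AE \<omega> in M. nn_cond_exp M (F k) (\<lambda>\<omega>. ennreal ((norm (e k \<omega>))\<^sup>2)) \<omega>
      \<le> ennreal ((1 - p) * (norm (ep k \<omega>))\<^sup>2 + 8 * (1 - p) * L\<^sup>2 / real b * (norm (x k \<omega> - x (k - 1) \<omega>))\<^sup>2
          + 2 * (1 - p) * L\<^sup>2 / real b * (norm (x (k - 1) \<omega> - x (k - 2) \<omega>))\<^sup>2 + p * (\<sigma>k k)\<^sup>2)"
      by (rule condC)
    fix \<omega> show "0 \<le> (norm (e k \<omega>))\<^sup>2" by simp
  next
    fix k i assume "i \<in> (Basis :: 'e set)"
    then show "AE \<omega> in M. real_cond_exp M (F k) (\<lambda>\<omega>. e k \<omega> \<bullet> i) \<omega> = (1 - p) * (ep k \<omega> \<bullet> i)"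
      by (rule condA)
  qed
qed


end
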